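(* Let $T$ be a CPTP map and $\mathcal{H}_S$ an invariant subspace with orthogonal projection $\Pi_S$. Then $\mathcal{H}_S$ is GAS if and only if the sequence of subspaces $\mathrm{supp}(T^{*n}(\Pi_S))$, $n=0,1,2,\dots$, is strictly increasing until it equals $\mathcal{H}$ (i.e. there is $N$ such that $\mathrm{supp}(T^{*n}(\Pi_S))\subsetneq\mathrm{supp}(T^{*(n+1)}(\Pi_S))$ for $n<N$ and $\mathrm{supp}(T^{*N}(\Pi_S))=\mathcal{H}$).
   Context: $\mathcal{H}$ is a finite-dimensional complex Hilbert space; $T$ is CPTP: $T(\rho)=\sum_kM_k\rho M_k^\dagger$, $\sum_kM_k^\dagger M_k=I$, with dual $T^*(A)=\sum_kM_k^\dagger AM_k$, $T^{*0}=\mathrm{id}$. $\mathrm{supp}(X)=(\ker X)^\perp$. $\mathcal{H}_S$ is invariant if $\rho\ge0$, $\mathrm{supp}(\rho)\subseteq\mathcal{H}_S$ implies $\mathrm{supp}(T(\rho))\subseteq\mathcal{H}_S$; an invariant $\mathcal{H}_S$ is GAS if $\lim_n\|T^n(\rho)-\Pi_ST^n(\rho)\Pi_S\|=0$ for every density operator $\rho$. *)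

theory Defs
  imports "Jordan_Normal_Form.Schur_Decomposition" "Jordan_Normal_Form.Matrix_Kernel"
begin

text \<open>The Hilbert space is \<open>\<complex>^d\<close>, represented by \<open>carrier_vec d\<close>;
  operators are \<open>d \<times> d\<close> complex matrices. \<open>v \<bullet>c w\<close> is the inner product
  (conjugate-linear in the second argument), \<open>mat_adjoint\<close> is the conjugate transpose.\<close>

definition kraus_ops :: "nat \<Rightarrow> complex mat list \<Rightarrow> bool" where
  "kraus_ops d Ms \<longleftrightarrow> (\<forall>M \<in> set Ms. M \<in> carrier_mat d d) \<and>
     foldr (\<lambda>M acc. mat_adjoint M * M + acc) Ms (0\<^sub>m d d) = 1\<^sub>m d"

definition kraus_map :: "nat \<Rightarrow> complex mat list \<Rightarrow> complex mat \<Rightarrow> complex mat" where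
  "kraus_map d Ms \<rho> = foldr (\<lambda>M acc. M * \<rho> * mat_adjoint M + acc) Ms (0\<^sub>m d d)"

definition kraus_dual :: "nat \<Rightarrow> complex mat list \<Rightarrow> complex mat \<Rightarrow> complex mat" where
  "kraus_dual d Ms A = foldr (\<lambda>M acc. mat_adjoint M * A * M + acc) Ms (0\<^sub>m d d)"

definition mtrace :: "complex mat \<Rightarrow> complex" where
  "mtrace A = (\<Sum>i < dim_row A. A $$ (i, i))"

definition positive_op :: "nat \<Rightarrow> complex mat \<Rightarrow> bool" where
  "positive_op d A \<longleftrightarrow> A \<in> carrier_mat d d \<and>
     (\<forall>v \<in> carrier_vec d. (A *\<^sub>v v) \<bullet>c v \<in> \<real> \<and> Re ((A *\<^sub>v v) \<bullet>c v) \<ge> 0)"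

definition density_op :: "nat \<Rightarrow> complex mat \<Rightarrow> bool" where
  "density_op d \<rho> \<longleftrightarrow> positive_op d \<rho> \<and> mtrace \<rho> = 1"

definition supp :: "nat \<Rightarrow> complex mat \<Rightarrow> complex vec set" where
  "supp d X = {v \<in> carrier_vec d. \<forall>w \<in> mat_kernel X. v \<bullet>c w = 0}"

definition orth_proj :: "nat \<Rightarrow> complex mat \<Rightarrow> bool" where
  "orth_proj d P \<longleftrightarrow> P \<in> carrier_mat d d \<and> mat_adjoint P = P \<and> P * P = P"

definition proj_range :: "nat \<Rightarrow> complex mat \<Rightarrow> complex vec set" where
  "proj_range d P = {v \<in> carrier_vec d. P *\<^sub>v v = v}"

text \<open>Frobenius (Hilbert-Schmidt) norm; in finite dimension all norms are equivalent.\<close>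
definition mnorm :: "complex mat \<Rightarrow> real" where
  "mnorm A = sqrt (\<Sum>i < dim_row A. \<Sum>j < dim_col A. (cmod (A $$ (i, j)))\<^sup>2)"

definition invariant_sub :: "nat \<Rightarrow> complex mat list \<Rightarrow> complex vec set \<Rightarrow> bool" where
  "invariant_sub d Ms HS \<longleftrightarrow>
     (\<forall>\<rho>. positive_op d \<rho> \<and> supp d \<rho> \<subseteq> HS \<longrightarrow> supp d (kraus_map d Ms \<rho>) \<subseteq> HS)"

definition GAS :: "nat \<Rightarrow> complex mat list \<Rightarrow> complex mat \<Rightarrow> bool" where
  "GAS d Ms P \<longleftrightarrow> invariant_sub d Ms (proj_range d P) \<and>
     (\<forall>\<rho>. density_op d \<rho> \<longrightarrow>
        (\<lambda>n. mnorm ((kraus_map d Ms ^^ n) \<rho> - P * (kraus_map d Ms ^^ n) \<rho> * P)) \<longlonglongrightarrow> 0)"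

end

theory Submission
  imports Defs
begin


lemma cscalar_sum: "dim_vec (y::complex vec) = n \<Longrightarrow> x \<bullet>c y = (\<Sum>i<n. x $ i * cnj (y $ i))"
  unfolding scalar_prod_def by (auto intro!: sum.cong simp: atLeast0LessThan)

lemma adj_carrier[simp]: "M \<in> carrier_mat n m \<Longrightarrow> mat_adjoint M \<in> carrier_mat m n"
  unfolding mat_adjoint_def by (auto simp: mat_of_rows_def)

lemma adj_dims[simp]: "dim_row (mat_adjoint M) = dim_col M" "dim_col (mat_adjoint M) = dim_row M"
  unfolding mat_adjoint_def by (auto simp: mat_of_rows_def)

lemma adj_index[simp]: "i < dim_col (M::complex mat) \<Longrightarrow> j < dim_row M \<Longrightarrow> mat_adjoint M $$ (i,j) = cnj (M $$ (j,i))"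
  unfolding mat_adjoint_def by (auto simp: mat_of_rows_def)

lemma adj_mv_carrier[simp]: "M \<in> carrier_mat n m \<Longrightarrow> mat_adjoint M *\<^sub>v x \<in> carrier_vec m"
  unfolding carrier_vec_def carrier_mat_def by simp

lemma adj_adj[simp]: "mat_adjoint (mat_adjoint M) = (M::complex mat)"
  by (rule eq_matI) auto

lemma mult_mat_vec_index': "(A::complex mat) \<in> carrier_mat n m \<Longrightarrow> x \<in> carrier_vec m \<Longrightarrow> i < n \<Longrightarrow>
  (A *\<^sub>v x) $ i = (\<Sum>j<m. A $$ (i,j) * x $ j)"
  by (auto simp: mult_mat_vec_def scalar_prod_def atLeast0LessThan intro!: sum.cong)

lemma row_sprod: "(A::complex mat) \<in> carrier_mat n m \<Longrightarrow> x \<in> carrier_vec m \<Longrightarrow> i < n \<Longrightarrow>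
  row A i \<bullet> x = (\<Sum>j<m. A $$ (i,j) * x $ j)"
  by (auto simp: scalar_prod_def atLeast0LessThan intro!: sum.cong)

lemma adj_sprod:
  assumes M: "(M::complex mat) \<in> carrier_mat n m" and x: "x \<in> carrier_vec m" and y: "y \<in> carrier_vec n"
  shows "(M *\<^sub>v x) \<bullet>c y = x \<bullet>c (mat_adjoint M *\<^sub>v y)"
proof -
  have "(M *\<^sub>v x) \<bullet>c y = (\<Sum>i<n. (\<Sum>j<m. M $$ (i,j) * x $ j) * cnj (y $ i))"
    using M x y by (subst cscalar_sum[of _ n]) (auto simp: row_sprod intro!: sum.cong)
  also have "\<dots> = (\<Sum>j<m. x $ j * (\<Sum>i<n. M $$ (i,j) * cnj (y $ i)))"
    by (simp add: sum_distrib_left sum_distrib_right sum.swap[of _ "{..<n}"] mult_ac)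
  also have "\<dots> = x \<bullet>c (mat_adjoint M *\<^sub>v y)"
    using M x y by (subst cscalar_sum[of _ m]) (auto simp: row_sprod[of _ m n] mult_ac intro!: sum.cong)
  finally show ?thesis .
qed

definition S :: "complex mat \<Rightarrow> complex vec \<Rightarrow> complex vec \<Rightarrow> complex" where
  "S A x y = (A *\<^sub>v x) \<bullet>c y"

lemma S_sum: assumes "A \<in> carrier_mat n n" "x \<in> carrier_vec n" "y \<in> carrier_vec n"
  shows "S A x y = (\<Sum>i<n. \<Sum>j<n. A $$ (i,j) * x $ j * cnj (y $ i))"
  using assms unfolding S_def
  by (subst cscalar_sum[of _ n]) (auto simp: row_sprod sum_distrib_right intro!: sum.cong)

lemma S_add1: assumes A: "A \<in> carrier_mat n n" and v: "x \<in> carrier_vec n" "y \<in> carrier_vec n" "w \<in> carrier_vec n"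
  shows "S A (x + y) w = S A x w + S A y w"
proof -
  have "S A (x + y) w = (\<Sum>i<n. \<Sum>j<n. A $$ (i,j) * (x+y) $ j * cnj (w $ i))"
    using v by (intro S_sum[OF A]) auto
  also have "\<dots> = (\<Sum>i<n. \<Sum>j<n. A $$ (i,j) * x $ j * cnj (w $ i) + A $$ (i,j) * y $ j * cnj (w $ i))"
    using v by (intro sum.cong refl) (auto simp: distrib_left distrib_right)
  also have "\<dots> = S A x w + S A y w"
    using v by (simp add: S_sum[OF A] sum.distrib)
  finally show ?thesis .
qed
lemma S_add2: assumes A: "A \<in> carrier_mat n n" and v: "x \<in> carrier_vec n" "y \<in> carrier_vec n" "w \<in> carrier_vec n"
  shows "S A w (x + y) = S A w x + S A w y"
proof -
  have "S A w (x + y) = (\<Sum>i<n. \<Sum>j<n. A $$ (i,j) * w $ j * cnj ((x+y) $ i))"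
    using v by (intro S_sum[OF A]) auto
  also have "\<dots> = (\<Sum>i<n. \<Sum>j<n. A $$ (i,j) * w $ j * cnj (x $ i) + A $$ (i,j) * w $ j * cnj (y $ i))"
    using v by (intro sum.cong refl) (auto simp: algebra_simps)
  also have "\<dots> = S A w x + S A w y"
    using v by (simp add: S_sum[OF A] sum.distrib)
  finally show ?thesis .
qed

lemma S_sub1: assumes A: "A \<in> carrier_mat n n" and v: "x \<in> carrier_vec n" "y \<in> carrier_vec n" "w \<in> carrier_vec n"
  shows "S A (x - y) w = S A x w - S A y w"
proof -
  have "S A (x - y) w = (\<Sum>i<n. \<Sum>j<n. A $$ (i,j) * (x-y) $ j * cnj (w $ i))"
    using v by (intro S_sum[OF A]) auto
  also have "\<dots> = (\<Sum>i<n. \<Sum>j<n. A $$ (i,j) * x $ j * cnj (w $ i) - A $$ (i,j) * y $ j * cnj (w $ i))"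
    using v by (intro sum.cong refl) (auto simp: algebra_simps)
  also have "\<dots> = S A x w - S A y w"
    using v by (simp add: S_sum[OF A] sum_subtractf)
  finally show ?thesis .
qed

lemma S_sub2: assumes A: "A \<in> carrier_mat n n" and v: "x \<in> carrier_vec n" "y \<in> carrier_vec n" "w \<in> carrier_vec n"
  shows "S A w (x - y) = S A w x - S A w y"
proof -
  have "S A w (x - y) = (\<Sum>i<n. \<Sum>j<n. A $$ (i,j) * w $ j * cnj ((x-y) $ i))"
    using v by (intro S_sum[OF A]) auto
  also have "\<dots> = (\<Sum>i<n. \<Sum>j<n. A $$ (i,j) * w $ j * cnj (x $ i) - A $$ (i,j) * w $ j * cnj (y $ i))"
    using v by (intro sum.cong refl) (auto simp: algebra_simps)
  also have "\<dots> = S A w x - S A w y"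
    using v by (simp add: S_sum[OF A] sum_subtractf)
  finally show ?thesis .
qed

lemma S_smult1: assumes A: "A \<in> carrier_mat n n" and v: "x \<in> carrier_vec n" "w \<in> carrier_vec n"
  shows "S A (c \<cdot>\<^sub>v x) w = c * S A x w"
proof -
  have "S A (c \<cdot>\<^sub>v x) w = (\<Sum>i<n. \<Sum>j<n. A $$ (i,j) * (c \<cdot>\<^sub>v x) $ j * cnj (w $ i))"
    using v by (intro S_sum[OF A]) auto
  also have "\<dots> = (\<Sum>i<n. \<Sum>j<n. c * (A $$ (i,j) * x $ j * cnj (w $ i)))"
    using v by (intro sum.cong refl) (auto simp: algebra_simps)
  also have "\<dots> = c * S A x w"
    using v by (simp add: S_sum[OF A] sum_distrib_left)
  finally show ?thesis .
qed

lemma S_smult2: assumes A: "A \<in> carrier_mat n n" and v: "x \<in> carrier_vec n" "w \<in> carrier_vec n"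
  shows "S A w (c \<cdot>\<^sub>v x) = cnj c * S A w x"
proof -
  have "S A w (c \<cdot>\<^sub>v x) = (\<Sum>i<n. \<Sum>j<n. A $$ (i,j) * w $ j * cnj ((c \<cdot>\<^sub>v x) $ i))"
    using v by (intro S_sum[OF A]) auto
  also have "\<dots> = (\<Sum>i<n. \<Sum>j<n. cnj c * (A $$ (i,j) * w $ j * cnj (x $ i)))"
    using v by (intro sum.cong refl) (auto simp: algebra_simps)
  also have "\<dots> = cnj c * S A w x"
    using v by (simp add: S_sum[OF A] sum_distrib_left)
  finally show ?thesis .
qed
lemma S_expand: assumes A: "A \<in> carrier_mat n n" and v: "x \<in> carrier_vec n" "y \<in> carrier_vec n"
  shows "S A (x + y) (x + y) = S A x x + S A x y + S A y x + S A y y"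
  using v by (simp add: S_add1[OF A] S_add2[OF A])

lemma pos_real: "positive_op n A \<Longrightarrow> x \<in> carrier_vec n \<Longrightarrow> S A x x = of_real (Re (S A x x))"
  unfolding positive_op_def S_def by (auto simp: complex_eq_iff Reals_def)

lemma pos_Im: "positive_op n A \<Longrightarrow> x \<in> carrier_vec n \<Longrightarrow> Im (S A x x) = 0"
  unfolding positive_op_def S_def by (auto simp: Reals_def)

lemma pos_Re: "positive_op n A \<Longrightarrow> x \<in> carrier_vec n \<Longrightarrow> Re (S A x x) \<ge> 0"
  unfolding positive_op_def S_def by auto

lemma pos_carrier: "positive_op n A \<Longrightarrow> A \<in> carrier_mat n n"
  unfolding positive_op_def by auto

lemma pos_herm: assumes P: "positive_op n A" and v: "x \<in> carrier_vec n" "y \<in> carrier_vec n"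
  shows "S A y x = cnj (S A x y)"
proof -
  have A: "A \<in> carrier_mat n n" using P by (rule pos_carrier)
  let ?a = "S A x y" and ?b = "S A y x"
  have iy: "\<i> \<cdot>\<^sub>v y \<in> carrier_vec n" using v by auto
  have "Im (S A (x + y) (x + y)) = 0" using P v by (intro pos_Im) auto
  hence 1: "Im ?a + Im ?b = 0"
    using S_expand[OF A v] pos_Im[OF P v(1)] pos_Im[OF P v(2)] by simp
  have "Im (S A (x + \<i> \<cdot>\<^sub>v y) (x + \<i> \<cdot>\<^sub>v y)) = 0" using P v by (intro pos_Im) auto
  hence "Im (S A x x + cnj \<i> * ?a + \<i> * ?b + \<i> * (cnj \<i> * S A y y)) = 0"
    using S_expand[OF A v(1) iy] S_smult1[OF A v(2) v(1)] S_smult2[OF A v(2) v(1)]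
      S_smult1[OF A v(2) iy] S_smult2[OF A v(2) v(2)] by simp
  hence 2: "Re ?b - Re ?a = 0"
    using pos_Im[OF P v(1)] pos_Im[OF P v(2)] by simp
  show ?thesis using 1 2 by (simp add: complex_eq_iff)
qed
lemma pos_quad: assumes P: "positive_op n A" and v: "x \<in> carrier_vec n" "y \<in> carrier_vec n"
  shows "Re (S A (x + l \<cdot>\<^sub>v y) (x + l \<cdot>\<^sub>v y)) = Re (S A x x) + 2 * Re (cnj l * S A x y) + (cmod l)^2 * Re (S A y y)"
proof -
  have A: "A \<in> carrier_mat n n" using P by (rule pos_carrier)
  have ly: "l \<cdot>\<^sub>v y \<in> carrier_vec n" using v by auto
  have e: "S A (x + l \<cdot>\<^sub>v y) (x + l \<cdot>\<^sub>v y) = S A x x + cnj l * S A x y + l * cnj (S A x y) + l * (cnj l * S A y y)"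
    unfolding S_expand[OF A v(1) ly] S_smult1[OF A v(2) v(1)] S_smult2[OF A v(2) v(1)]
      S_smult1[OF A v(2) ly] S_smult2[OF A v(2) v(2)] pos_herm[OF P v] ..
  have "l * (cnj l * S A y y) = of_real ((cmod l)^2 * Re (S A y y))"
  proof -
    have "l * (cnj l * S A y y) = (l * cnj l) * S A y y" by (simp add: mult.assoc)
    also have "\<dots> = of_real ((cmod l)^2) * of_real (Re (S A y y))"
      by (subst pos_real[OF P v(2)]) (simp add: complex_norm_square[symmetric])
    finally show ?thesis by simp
  qed
  moreover have "Re (l * cnj (S A x y)) = Re (cnj l * S A x y)"
    by simp
  ultimately show ?thesis unfolding e by simp
qed

lemma pos_CS: assumes P: "positive_op n A" and v: "x \<in> carrier_vec n" "y \<in> carrier_vec n"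
  shows "(cmod (S A x y))^2 \<le> Re (S A x x) * Re (S A y y)"
proof -
  define a where "a = Re (S A x x)"
  define c where "c = Re (S A y y)"
  define b where "b = S A x y"
  have a0: "a \<ge> 0" "c \<ge> 0" unfolding a_def c_def using pos_Re[OF P] v by auto
  have key: "a - 2 * t * (cmod b)^2 + t^2 * (cmod b)^2 * c \<ge> 0" for t :: real
  proof -
    have "0 \<le> Re (S A (x + (- (of_real t * b)) \<cdot>\<^sub>v y) (x + (- (of_real t * b)) \<cdot>\<^sub>v y))"
      using v by (intro pos_Re[OF P]) auto
    also have "\<dots> = a + 2 * Re (cnj (- (of_real t * b)) * b) + (cmod (- (of_real t * b)))^2 * c"
      unfolding pos_quad[OF P v] a_def b_def c_def ..
    also have "cnj (- (of_real t * b)) * b = - (of_real t * (cnj b * b))"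
      by (simp add: mult.commute mult.left_commute)
    also have "cnj b * b = of_real ((cmod b)^2)"
      by (simp add: complex_norm_square[symmetric] mult.commute)
    also have "(cmod (- (of_real t * b)))^2 = t^2 * (cmod b)^2"
      by (simp add: norm_mult power_mult_distrib)
    finally have "0 \<le> a + 2 * (- (t * (cmod b)^2)) + t^2 * (cmod b)^2 * c"
      by (simp del: of_real_power)
    thus ?thesis by linarith
  qed
  show ?thesis
  proof (cases "c = 0")
    case True
    show ?thesis
    proof (rule ccontr)
      assume "\<not> ?thesis"
      hence bp: "(cmod b)^2 > 0" using True a0 unfolding a_def b_def c_def by (auto simp: zero_less_power2)
      have "a - 2 * ((a + 1) / (2 * (cmod b)^2)) * (cmod b)^2 + ((a + 1) / (2 * (cmod b)^2))^2 * (cmod b)^2 * c \<ge> 0"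
        by (rule key)
      hence "a - (a + 1) \<ge> 0" using bp True by simp
      thus False by simp
    qed
  next
    case False
    hence cp: "c > 0" using a0 by simp
    have "a - 2 * (1/c) * (cmod b)^2 + (1/c)^2 * (cmod b)^2 * c \<ge> 0" by (rule key)
    moreover have "(1/c)^2 * (cmod b)^2 * c = (1/c) * (cmod b)^2" using cp by (simp add: power2_eq_square)
    ultimately have "a - (1/c) * (cmod b)^2 \<ge> 0" by simp
    hence "(1/c) * (cmod b)^2 \<le> a" by simp
    hence "(cmod b)^2 \<le> a * c" using cp by (simp add: divide_simps mult.commute)
    thus ?thesis unfolding a_def b_def c_def .
  qed
qed

lemma pos_S_zero: assumes P: "positive_op n A" and v: "x \<in> carrier_vec n" "s \<in> carrier_vec n"
  and z: "Re (S A s s) = 0"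
  shows "S A x s = 0" "S A s x = 0"
proof -
  have "(cmod (S A x s))^2 \<le> 0" using pos_CS[OF P v] z by simp
  thus 1: "S A x s = 0" by simp
  show "S A s x = 0" using pos_herm[OF P v] 1 by simp
qed

lemma pos_zero: assumes P: "positive_op n A" and v: "w \<in> carrier_vec n"
  and z: "Re (S A w w) = 0"
  shows "A *\<^sub>v w = 0\<^sub>v n"
proof -
  have A: "A \<in> carrier_mat n n" using P by (rule pos_carrier)
  have Aw: "A *\<^sub>v w \<in> carrier_vec n" using A v by auto
  have "S A w (A *\<^sub>v w) = 0" using pos_S_zero(2)[OF P Aw v z] .
  hence "(A *\<^sub>v w) \<bullet>c (A *\<^sub>v w) = 0" unfolding S_def .
  thus ?thesis using Aw by simp
qed

lemma S_add_mat: "A \<in> carrier_mat n n \<Longrightarrow> B \<in> carrier_mat n n \<Longrightarrow> x \<in> carrier_vec n \<Longrightarrow> y \<in> carrier_vec n \<Longrightarrow>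
  S (A + B) x y = S A x y + S B x y"
  unfolding S_def by (simp add: add_mult_distrib_mat_vec add_scalar_prod_distrib[of _ n])

lemma S_zero_mat: "x \<in> carrier_vec n \<Longrightarrow> y \<in> carrier_vec n \<Longrightarrow> S (0\<^sub>m n n) x y = 0"
  by (simp add: S_sum[of _ n])

lemma dual_carrier: "\<forall>M\<in>set Ms. M \<in> carrier_mat d d \<Longrightarrow> A \<in> carrier_mat d d \<Longrightarrow>
  kraus_dual d Ms A \<in> carrier_mat d d"
  unfolding kraus_dual_def by (induct Ms) auto

lemma map_carrier: "\<forall>M\<in>set Ms. M \<in> carrier_mat d d \<Longrightarrow> A \<in> carrier_mat d d \<Longrightarrow>
  kraus_map d Ms A \<in> carrier_mat d d"
  unfolding kraus_map_def by (induct Ms) auto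

lemma dual_S: assumes Ms: "\<forall>M\<in>set Ms. M \<in> carrier_mat d d" and A: "A \<in> carrier_mat d d"
  and v: "x \<in> carrier_vec d" "y \<in> carrier_vec d"
  shows "S (kraus_dual d Ms A) x y = (\<Sum>M\<leftarrow>Ms. S A (M *\<^sub>v x) (M *\<^sub>v y))"
  using Ms
proof (induct Ms)
  case Nil
  then show ?case using v by (simp add: kraus_dual_def S_zero_mat)
next
  case (Cons M Ms)
  have M: "M \<in> carrier_mat d d" using Cons by auto
  have Ma: "mat_adjoint M \<in> carrier_mat d d" using M by simp
  have rest: "kraus_dual d Ms A \<in> carrier_mat d d" using Cons A by (intro dual_carrier) auto
  have e: "kraus_dual d (M # Ms) A = mat_adjoint M * A * M + kraus_dual d Ms A"
    unfolding kraus_dual_def by simp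
  have "S (mat_adjoint M * A * M) x y = S A (M *\<^sub>v x) (M *\<^sub>v y)"
  proof -
    have "(mat_adjoint M * A * M) *\<^sub>v x = mat_adjoint M *\<^sub>v (A *\<^sub>v (M *\<^sub>v x))"
      by (rule trans[OF assoc_mult_mat_vec[of "mat_adjoint M * A" d d M d x]
        assoc_mult_mat_vec[of "mat_adjoint M" d d A d "M *\<^sub>v x"]]) (use M Ma A v in auto)
    moreover have "(mat_adjoint M *\<^sub>v (A *\<^sub>v (M *\<^sub>v x))) \<bullet>c y = (A *\<^sub>v (M *\<^sub>v x)) \<bullet>c (M *\<^sub>v y)"
      using adj_sprod[of "mat_adjoint M" d d "A *\<^sub>v (M *\<^sub>v x)" y] M A v by simp
    ultimately show ?thesis unfolding S_def by simp
  qed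
  moreover have "mat_adjoint M * A * M \<in> carrier_mat d d" "M * A * mat_adjoint M \<in> carrier_mat d d"
    using M Ma A by (auto intro!: mult_carrier_mat)
  ultimately show ?case using Cons M A rest v
    by (simp add: e S_add_mat[of _ d])
qed

lemma map_S: assumes Ms: "\<forall>M\<in>set Ms. M \<in> carrier_mat d d" and A: "A \<in> carrier_mat d d"
  and v: "x \<in> carrier_vec d" "y \<in> carrier_vec d"
  shows "S (kraus_map d Ms A) x y = (\<Sum>M\<leftarrow>Ms. S A (mat_adjoint M *\<^sub>v x) (mat_adjoint M *\<^sub>v y))"
  using Ms
proof (induct Ms)
  case Nil
  then show ?case using v by (simp add: kraus_map_def S_zero_mat)
next
  case (Cons M Ms)
  have M: "M \<in> carrier_mat d d" using Cons by auto
  have Ma: "mat_adjoint M \<in> carrier_mat d d" using M by simp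
  have rest: "kraus_map d Ms A \<in> carrier_mat d d" using Cons A by (intro map_carrier) auto
  have e: "kraus_map d (M # Ms) A = M * A * mat_adjoint M + kraus_map d Ms A"
    unfolding kraus_map_def by simp
  have "S (M * A * mat_adjoint M) x y = S A (mat_adjoint M *\<^sub>v x) (mat_adjoint M *\<^sub>v y)"
  proof -
    have "(M * A * mat_adjoint M) *\<^sub>v x = M *\<^sub>v (A *\<^sub>v (mat_adjoint M *\<^sub>v x))"
      by (rule trans[OF assoc_mult_mat_vec[of "M * A" d d "mat_adjoint M" d x]
        assoc_mult_mat_vec[of M d d A d "mat_adjoint M *\<^sub>v x"]]) (use M Ma A v in auto)
    moreover have "(M *\<^sub>v (A *\<^sub>v (mat_adjoint M *\<^sub>v x))) \<bullet>c y = (A *\<^sub>v (mat_adjoint M *\<^sub>v x)) \<bullet>c (mat_adjoint M *\<^sub>v y)"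
      using adj_sprod[of M d d "A *\<^sub>v (mat_adjoint M *\<^sub>v x)" y] M A v by simp
    ultimately show ?thesis unfolding S_def by simp
  qed
  moreover have "mat_adjoint M * A * M \<in> carrier_mat d d" "M * A * mat_adjoint M \<in> carrier_mat d d"
    using M Ma A by (auto intro!: mult_carrier_mat)
  ultimately show ?case using Cons M A rest v
    by (simp add: e S_add_mat[of _ d])
qed

definition nrm2 :: "complex vec \<Rightarrow> real" where "nrm2 v = Re (v \<bullet>c v)"

lemma cnorm_ge: "v \<bullet>c v \<ge> (0::complex)"
  by (rule conjugate_square_ge_0_vec)

lemma cnorm_real: "v \<bullet>c v = of_real (nrm2 (v::complex vec))"
  using cnorm_ge[of v] unfolding nrm2_def by (auto simp: less_eq_complex_def complex_eq_iff)

lemma nrm2_ge: "nrm2 v \<ge> 0"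
  using cnorm_ge[of v] unfolding nrm2_def by (auto simp: less_eq_complex_def)

lemma nrm2_0: "v \<in> carrier_vec n \<Longrightarrow> nrm2 v = 0 \<longleftrightarrow> v = 0\<^sub>v n"
proof -
  assume v: "v \<in> carrier_vec n"
  have "nrm2 v = 0 \<longleftrightarrow> v \<bullet>c v = 0" using cnorm_real[of v] by auto
  also have "\<dots> \<longleftrightarrow> v = 0\<^sub>v n" using v by simp
  finally show ?thesis .
qed

lemma S_one: "x \<in> carrier_vec n \<Longrightarrow> S (1\<^sub>m n) x y = x \<bullet>c y"
  unfolding S_def by simp

lemma sum_list_Re: "Re (\<Sum>x\<leftarrow>xs. f x) = (\<Sum>x\<leftarrow>xs. Re (f x))"
  by (induct xs) auto

lemma sum_list_pos: "(\<forall>x\<in>set xs. f x \<in> \<real> \<and> Re (f x) \<ge> 0) \<Longrightarrow>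
   (\<Sum>x\<leftarrow>xs. f x) \<in> \<real> \<and> Re (\<Sum>x\<leftarrow>xs. f x) \<ge> 0"
  by (induct xs) auto

lemma pos_opI: "A \<in> carrier_mat n n \<Longrightarrow> (\<And>v. v \<in> carrier_vec n \<Longrightarrow> S A v v \<in> \<real> \<and> Re (S A v v) \<ge> 0) \<Longrightarrow> positive_op n A"
  unfolding positive_op_def S_def by auto

lemma pos_S_real: "positive_op n A \<Longrightarrow> x \<in> carrier_vec n \<Longrightarrow> S A x x \<in> \<real> \<and> Re (S A x x) \<ge> 0"
  unfolding positive_op_def S_def by auto

lemma dual_pos: assumes Ms: "\<forall>M\<in>set Ms. M \<in> carrier_mat d d" and P: "positive_op d A"
  shows "positive_op d (kraus_dual d Ms A)"
proof (rule pos_opI)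
  have A: "A \<in> carrier_mat d d" using P by (rule pos_carrier)
  show "kraus_dual d Ms A \<in> carrier_mat d d" using Ms A by (rule dual_carrier)
  fix v :: "complex vec" assume v: "v \<in> carrier_vec d"
  show "S (kraus_dual d Ms A) v v \<in> \<real> \<and> 0 \<le> Re (S (kraus_dual d Ms A) v v)"
    unfolding dual_S[OF Ms A v v]
    by (rule sum_list_pos) (use Ms v P in \<open>auto intro!: pos_S_real\<close>)
qed

lemma map_pos: assumes Ms: "\<forall>M\<in>set Ms. M \<in> carrier_mat d d" and P: "positive_op d A"
  shows "positive_op d (kraus_map d Ms A)"
proof (rule pos_opI)
  have A: "A \<in> carrier_mat d d" using P by (rule pos_carrier)
  show "kraus_map d Ms A \<in> carrier_mat d d" using Ms A by (rule map_carrier)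
  fix v :: "complex vec" assume v: "v \<in> carrier_vec d"
  show "S (kraus_map d Ms A) v v \<in> \<real> \<and> 0 \<le> Re (S (kraus_map d Ms A) v v)"
    unfolding map_S[OF Ms A v v]
    by (rule sum_list_pos) (use Ms v P in \<open>auto intro!: pos_S_real\<close>)
qed

lemma dual_pow_pos: "\<forall>M\<in>set Ms. M \<in> carrier_mat d d \<Longrightarrow> positive_op d A \<Longrightarrow> positive_op d ((kraus_dual d Ms ^^ n) A)"
  by (induct n) (auto intro: dual_pos)

lemma map_pow_pos: "\<forall>M\<in>set Ms. M \<in> carrier_mat d d \<Longrightarrow> positive_op d A \<Longrightarrow> positive_op d ((kraus_map d Ms ^^ n) A)"
  by (induct n) (auto intro: map_pos)

lemma dual_pow_carrier: "\<forall>M\<in>set Ms. M \<in> carrier_mat d d \<Longrightarrow> A \<in> carrier_mat d d \<Longrightarrow> (kraus_dual d Ms ^^ n) A \<in> carrier_mat d d"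
  by (induct n) (auto intro: dual_carrier)

lemma map_pow_carrier: "\<forall>M\<in>set Ms. M \<in> carrier_mat d d \<Longrightarrow> A \<in> carrier_mat d d \<Longrightarrow> (kraus_map d Ms ^^ n) A \<in> carrier_mat d d"
  by (induct n) (auto intro: map_carrier)

lemma kraus_one: assumes K: "kraus_ops d Ms"
  shows "kraus_dual d Ms (1\<^sub>m d) = 1\<^sub>m d"
proof -
  have Ms: "\<forall>M\<in>set Ms. M \<in> carrier_mat d d" using K unfolding kraus_ops_def by auto
  have "kraus_dual d Ms (1\<^sub>m d) = foldr (\<lambda>M acc. mat_adjoint M * M + acc) Ms (0\<^sub>m d d)"
    unfolding kraus_dual_def
    by (rule foldr_cong) (use Ms in auto)
  thus ?thesis using K unfolding kraus_ops_def by simp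
qed

lemma kraus_norm: assumes K: "kraus_ops d Ms" and v: "v \<in> carrier_vec d"
  shows "(\<Sum>M\<leftarrow>Ms. nrm2 (M *\<^sub>v v)) = nrm2 v"
proof -
  have Ms: "\<forall>M\<in>set Ms. M \<in> carrier_mat d d" using K unfolding kraus_ops_def by auto
  have "S (kraus_dual d Ms (1\<^sub>m d)) v v = (\<Sum>M\<leftarrow>Ms. S (1\<^sub>m d) (M *\<^sub>v v) (M *\<^sub>v v))"
    by (rule dual_S[OF Ms _ v v]) simp
  also have "\<dots> = (\<Sum>M\<leftarrow>Ms. (M *\<^sub>v v) \<bullet>c (M *\<^sub>v v))"
    by (rule arg_cong[where f = sum_list], rule map_cong) (use Ms v in \<open>auto intro!: S_one mult_mat_vec_carrier\<close>)
  finally have "v \<bullet>c v = (\<Sum>M\<leftarrow>Ms. (M *\<^sub>v v) \<bullet>c (M *\<^sub>v v))"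
    using v by (simp add: kraus_one[OF K] S_one)
  hence "Re (v \<bullet>c v) = Re (\<Sum>M\<leftarrow>Ms. (M *\<^sub>v v) \<bullet>c (M *\<^sub>v v))" by simp
  thus ?thesis unfolding sum_list_Re nrm2_def by simp
qed

lemma conj_unit[simp]: "conjugate (unit_vec n i :: complex vec) = unit_vec n i"
  by (rule eq_vecI) (auto simp: unit_vec_def)

lemma S_unit: assumes A: "A \<in> carrier_mat n n" and ij: "i < n" "j < n"
  shows "S A (unit_vec n j) (unit_vec n i) = A $$ (i,j)"
proof -
  have "S A (unit_vec n j) (unit_vec n i) = (A *\<^sub>v unit_vec n j) $ i"
    unfolding S_def using ij by simp
  also have "\<dots> = row A i \<bullet> unit_vec n j" using A ij by simp
  also have "\<dots> = A $$ (i,j)" using A ij by simp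
  finally show ?thesis .
qed

lemma mtrace_S: "A \<in> carrier_mat n n \<Longrightarrow> mtrace A = (\<Sum>i<n. S A (unit_vec n i) (unit_vec n i))"
  unfolding mtrace_def by (auto simp: S_unit intro!: sum.cong)

lemma mtrace_comm: assumes "A \<in> carrier_mat n m" "B \<in> carrier_mat m n"
  shows "mtrace (A * B) = mtrace (B * A)"
proof -
  have "mtrace (A * B) = (\<Sum>i<n. \<Sum>j<m. A $$ (i,j) * B $$ (j,i))"
    unfolding mtrace_def using assms
    by (auto simp: scalar_prod_def atLeast0LessThan intro!: sum.cong)
  also have "\<dots> = (\<Sum>j<m. \<Sum>i<n. B $$ (j,i) * A $$ (i,j))"
    by (subst sum.swap) (simp add: mult.commute)
  also have "\<dots> = mtrace (B * A)"
    unfolding mtrace_def using assms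
    by (auto simp: scalar_prod_def atLeast0LessThan intro!: sum.cong)
  finally show ?thesis .
qed

lemma mtrace_add: "A \<in> carrier_mat n n \<Longrightarrow> B \<in> carrier_mat n n \<Longrightarrow> mtrace (A + B) = mtrace A + mtrace B"
  unfolding mtrace_def by (simp add: sum.distrib)

lemma mtrace_minus: "A \<in> carrier_mat n n \<Longrightarrow> B \<in> carrier_mat n n \<Longrightarrow> mtrace (A - B) = mtrace A - mtrace B"
  unfolding mtrace_def by (simp add: sum_subtractf)

lemma mtrace_zero: "mtrace (0\<^sub>m n n) = 0"
  unfolding mtrace_def by simp

lemma trace_dual: assumes Ms: "\<forall>M\<in>set Ms. M \<in> carrier_mat d d" and A: "A \<in> carrier_mat d d"
  and R: "R \<in> carrier_mat d d"
  shows "mtrace (A * kraus_map d Ms R) = mtrace (kraus_dual d Ms A * R)"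
  using Ms
proof (induct Ms)
  case Nil
  then show ?case using A R by (simp add: kraus_map_def kraus_dual_def mtrace_zero)
next
  case (Cons M Ms)
  have M: "M \<in> carrier_mat d d" using Cons by auto
  have Ma: "mat_adjoint M \<in> carrier_mat d d" using M by simp
  have r1: "kraus_map d Ms R \<in> carrier_mat d d" using Cons R by (intro map_carrier) auto
  have r2: "kraus_dual d Ms A \<in> carrier_mat d d" using Cons A by (intro dual_carrier) auto
  have IH: "mtrace (A * kraus_map d Ms R) = mtrace (kraus_dual d Ms A * R)" using Cons by auto
  have c1: "M * R * mat_adjoint M \<in> carrier_mat d d" "mat_adjoint M * A * M \<in> carrier_mat d d"
    using M Ma A R by auto
  have "mtrace (A * (M * R * mat_adjoint M)) = mtrace ((A * (M * R)) * mat_adjoint M)"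
    using M Ma A R by (simp add: assoc_mult_mat[of _ d d _ d _ d])
  also have "\<dots> = mtrace (mat_adjoint M * (A * (M * R)))"
    by (rule mtrace_comm[of _ d d]) (use M Ma A R in auto)
  also have "\<dots> = mtrace (mat_adjoint M * A * M * R)"
    using M Ma A R by (simp add: assoc_mult_mat[of _ d d _ d _ d])
  finally have e: "mtrace (A * (M * R * mat_adjoint M)) = mtrace (mat_adjoint M * A * M * R)" .
  have "mtrace (A * kraus_map d (M # Ms) R) = mtrace (A * (M * R * mat_adjoint M) + A * kraus_map d Ms R)"
    unfolding kraus_map_def using A c1 r1 by (simp add: kraus_map_def[symmetric] mult_add_distrib_mat[of _ d d])
  also have "\<dots> = mtrace (mat_adjoint M * A * M * R) + mtrace (kraus_dual d Ms A * R)"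
    using A c1 r1 e IH by (simp add: mtrace_add[of _ d])
  also have "\<dots> = mtrace ((mat_adjoint M * A * M + kraus_dual d Ms A) * R)"
    using R c1 r2 by (simp add: mtrace_add[of _ d] add_mult_distrib_mat[of _ d d])
  also have "\<dots> = mtrace (kraus_dual d (M # Ms) A * R)"
    unfolding kraus_dual_def by simp
  finally show ?case .
qed

lemma trace_dual_pow: assumes Ms: "\<forall>M\<in>set Ms. M \<in> carrier_mat d d" and A: "A \<in> carrier_mat d d"
  and R: "R \<in> carrier_mat d d"
  shows "mtrace (A * (kraus_map d Ms ^^ n) R) = mtrace ((kraus_dual d Ms ^^ n) A * R)"
  using A
proof (induct n arbitrary: A)
  case 0
  then show ?case by simp
next
  case (Suc n)
  have "mtrace (A * (kraus_map d Ms ^^ Suc n) R) = mtrace (A * kraus_map d Ms ((kraus_map d Ms ^^ n) R))"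
    by simp
  also have "\<dots> = mtrace (kraus_dual d Ms A * (kraus_map d Ms ^^ n) R)"
    by (rule trace_dual[OF Ms Suc(2) map_pow_carrier[OF Ms R]])
  also have "\<dots> = mtrace ((kraus_dual d Ms ^^ n) (kraus_dual d Ms A) * R)"
    by (rule Suc(1)) (rule dual_carrier[OF Ms Suc(2)])
  also have "\<dots> = mtrace ((kraus_dual d Ms ^^ Suc n) A * R)"
    by (simp add: funpow_swap1)
  finally show ?case .
qed

lemma csp_minus1: assumes "x \<in> carrier_vec n" "y \<in> carrier_vec n" "z \<in> carrier_vec n"
  shows "(x - y) \<bullet>c z = x \<bullet>c z - y \<bullet>c (z::complex vec)"
proof -
  have "(x - y) \<bullet>c z = (\<Sum>i<n. (x - y) $ i * cnj (z $ i))" using assms by (intro cscalar_sum) auto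
  also have "\<dots> = (\<Sum>i<n. x $ i * cnj (z $ i) - y $ i * cnj (z $ i))"
    using assms by (intro sum.cong refl) (auto simp: left_diff_distrib)
  also have "\<dots> = x \<bullet>c z - y \<bullet>c z" using assms by (simp add: sum_subtractf cscalar_sum[of z n])
  finally show ?thesis .
qed

lemma csp_minus2: assumes "x \<in> carrier_vec n" "y \<in> carrier_vec n" "z \<in> carrier_vec n"
  shows "z \<bullet>c (x - y) = z \<bullet>c x - z \<bullet>c (y::complex vec)"
proof -
  have "z \<bullet>c (x - y) = (\<Sum>i<n. z $ i * cnj ((x - y) $ i))" using assms by (intro cscalar_sum) auto
  also have "\<dots> = (\<Sum>i<n. z $ i * cnj (x $ i) - z $ i * cnj (y $ i))"
    using assms by (intro sum.cong refl) (auto simp: right_diff_distrib)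
  also have "\<dots> = z \<bullet>c x - z \<bullet>c y" using assms by (simp add: sum_subtractf cscalar_sum[of _ n])
  finally show ?thesis .
qed

lemma csp_add1: assumes "x \<in> carrier_vec n" "y \<in> carrier_vec n" "z \<in> carrier_vec n"
  shows "(x + y) \<bullet>c z = x \<bullet>c z + y \<bullet>c (z::complex vec)"
proof -
  have "(x + y) \<bullet>c z = (\<Sum>i<n. (x + y) $ i * cnj (z $ i))" using assms by (intro cscalar_sum) auto
  also have "\<dots> = (\<Sum>i<n. x $ i * cnj (z $ i) + y $ i * cnj (z $ i))"
    using assms by (intro sum.cong refl) (auto simp: distrib_right)
  also have "\<dots> = x \<bullet>c z + y \<bullet>c z" using assms by (simp add: sum.distrib cscalar_sum[of z n])
  finally show ?thesis .
qed

locale proj =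
  fixes d :: nat and P :: "complex mat"
  assumes OP: "orth_proj d P"
begin

definition "Q = 1\<^sub>m d - P"

lemma Pc[simp]: "P \<in> carrier_mat d d" using OP unfolding orth_proj_def by auto
lemma Qc[simp]: "Q \<in> carrier_mat d d" unfolding Q_def by (rule minus_carrier_mat) simp
lemma Padj: "mat_adjoint P = P" using OP unfolding orth_proj_def by auto
lemma PP: "P * P = P" using OP unfolding orth_proj_def by auto

lemma Pdims[simp]: "dim_row P = d" "dim_col P = d" by (rule carrier_matD[OF Pc])+
lemma Qdims[simp]: "dim_row Q = d" "dim_col Q = d" by (rule carrier_matD[OF Qc])+
lemma Pv[simp]: "x \<in> carrier_vec d \<Longrightarrow> P *\<^sub>v x \<in> carrier_vec d" by (rule mult_mat_vec_carrier[OF Pc])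
lemma Qv_c[simp]: "Q *\<^sub>v x \<in> carrier_vec d" by (metis Qc carrier_matD(1) carrier_vec_dim_vec dim_mult_mat_vec)

lemma PPv[simp]: "x \<in> carrier_vec d \<Longrightarrow> P *\<^sub>v (P *\<^sub>v x) = P *\<^sub>v x"
  using assoc_mult_mat_vec[of P d d P d x] PP by simp

lemma adjP: "x \<in> carrier_vec d \<Longrightarrow> y \<in> carrier_vec d \<Longrightarrow> (P *\<^sub>v x) \<bullet>c y = x \<bullet>c (P *\<^sub>v y)"
  using adj_sprod[of P d d x y] Padj by simp

lemma Qv: "x \<in> carrier_vec d \<Longrightarrow> Q *\<^sub>v x = x - P *\<^sub>v x"
  unfolding Q_def by (simp add: minus_mult_distrib_mat_vec[of _ d d])

lemma S_P: "x \<in> carrier_vec d \<Longrightarrow> y \<in> carrier_vec d \<Longrightarrow> S P x y = (P *\<^sub>v x) \<bullet>c (P *\<^sub>v y)"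
  unfolding S_def by (metis PPv Pv adjP)

lemma S_Q: assumes x: "x \<in> carrier_vec d" and y: "y \<in> carrier_vec d"
  shows "S Q x y = (Q *\<^sub>v x) \<bullet>c (Q *\<^sub>v y)"
proof -
  have "(Q *\<^sub>v x) \<bullet>c (Q *\<^sub>v y) = (Q *\<^sub>v x) \<bullet>c y - (Q *\<^sub>v x) \<bullet>c (P *\<^sub>v y)"
    using x y by (simp add: Qv csp_minus2[of _ d])
  also have "(Q *\<^sub>v x) \<bullet>c (P *\<^sub>v y) = 0"
    using x y by (simp add: Qv csp_minus1[of _ d] adjP)
  finally show ?thesis unfolding S_def by simp
qed

lemma S_PQ: assumes x: "x \<in> carrier_vec d"
  shows "S P x x + S Q x x = x \<bullet>c x"
  unfolding S_def using x by (simp add: Qv csp_minus1[of _ d])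

lemma posP: "positive_op d P"
  by (rule pos_opI) (auto simp: S_P cnorm_real nrm2_ge)

lemma posQ: "positive_op d Q"
  by (rule pos_opI) (auto simp: S_Q cnorm_real nrm2_ge)

lemma Re_PQ: "x \<in> carrier_vec d \<Longrightarrow> Re (S P x x) + Re (S Q x x) = nrm2 x"
  using S_PQ[of x] unfolding nrm2_def by (metis plus_complex.sel(1))

lemma ReQ: "x \<in> carrier_vec d \<Longrightarrow> Re (S Q x x) = nrm2 (Q *\<^sub>v x)"
  unfolding S_Q nrm2_def by simp

lemma ReQ_le: "x \<in> carrier_vec d \<Longrightarrow> Re (S Q x x) \<le> nrm2 x"
  using Re_PQ[of x] pos_Re[OF posP, of x] by simp

lemma Q_range: "x \<in> carrier_vec d \<Longrightarrow> P *\<^sub>v x = x \<Longrightarrow> Q *\<^sub>v x = 0\<^sub>v d"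
  by (simp add: Qv)

lemma decomp: "x \<in> carrier_vec d \<Longrightarrow> P *\<^sub>v x + Q *\<^sub>v x = x"
  by (simp add: Qv) (rule eq_vecI, auto)

lemma QQv[simp]: "x \<in> carrier_vec d \<Longrightarrow> Q *\<^sub>v (Q *\<^sub>v x) = Q *\<^sub>v x"
  by (simp add: Qv mult_minus_distrib_mat_vec[of _ d d]) (rule eq_vecI, auto)

lemma PQv[simp]: "x \<in> carrier_vec d \<Longrightarrow> P *\<^sub>v (Q *\<^sub>v x) = 0\<^sub>v d"
  by (simp add: Qv mult_minus_distrib_mat_vec[of _ d d])

lemma Pherm: "i < d \<Longrightarrow> j < d \<Longrightarrow> P $$ (i,j) = cnj (P $$ (j,i))"
  by (metis Padj Pdims adj_index)

lemma Qadj: "mat_adjoint Q = Q"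
proof (rule eq_matI)
  fix i j assume ij: "i < dim_row Q" "j < dim_col Q"
  hence ij': "i < d" "j < d" by auto
  have "mat_adjoint Q $$ (i, j) = cnj (Q $$ (j,i))" using ij by simp
  also have "\<dots> = (if j = i then 1 else 0) - cnj (P $$ (j,i))" using ij' by (simp add: Q_def)
  also have "cnj (P $$ (j,i)) = P $$ (i,j)" using Pherm[OF ij'] by simp
  also have "(if j = i then 1 else 0) - P $$ (i,j) = Q $$ (i,j)" using ij' by (simp add: Q_def)
  finally show "mat_adjoint Q $$ (i, j) = Q $$ (i, j)" .
qed auto

end


lemma csp_cnj: assumes "x \<in> carrier_vec n" "y \<in> carrier_vec n"
  shows "x \<bullet>c y = cnj (y \<bullet>c (x::complex vec))"
  using assms by (simp add: cscalar_sum[of _ n] mult.commute)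

definition rank1 :: "nat \<Rightarrow> complex vec \<Rightarrow> complex mat" where
  "rank1 n v = mat n n (\<lambda>(i,j). v $ i * cnj (v $ j))"

lemma rank1_carrier[simp]: "rank1 n v \<in> carrier_mat n n" unfolding rank1_def by simp

lemma rank1_mv: assumes v: "v \<in> carrier_vec n" and w: "w \<in> carrier_vec n"
  shows "rank1 n v *\<^sub>v w = (w \<bullet>c v) \<cdot>\<^sub>v v"
proof (rule eq_vecI)
  fix i assume "i < dim_vec ((w \<bullet>c v) \<cdot>\<^sub>v v)"
  hence i: "i < n" using v by simp
  have "(rank1 n v *\<^sub>v w) $ i = (\<Sum>j<n. rank1 n v $$ (i,j) * w $ j)"
    by (rule mult_mat_vec_index') (use i w in auto)
  also have "\<dots> = (\<Sum>j<n. v $ i * cnj (v $ j) * w $ j)"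
    using i by (auto simp: rank1_def intro!: sum.cong)
  also have "\<dots> = v $ i * (w \<bullet>c v)"
    using v by (simp add: cscalar_sum[of _ n] sum_distrib_left mult_ac)
  finally show "(rank1 n v *\<^sub>v w) $ i = ((w \<bullet>c v) \<cdot>\<^sub>v v) $ i" using i v by (simp add: mult.commute)
qed (use v in \<open>auto simp: rank1_def\<close>)

lemma rank1_S: assumes v: "v \<in> carrier_vec n" and w: "w \<in> carrier_vec n"
  shows "S (rank1 n v) w w = of_real ((cmod (w \<bullet>c v))^2)"
proof -
  have "S (rank1 n v) w w = (w \<bullet>c v) * (v \<bullet>c w)"
    unfolding S_def rank1_mv[OF v w] using v w by (simp add: scalar_prod_def sum_distrib_left mult.assoc)
  also have "\<dots> = (w \<bullet>c v) * cnj (w \<bullet>c v)" using csp_cnj[OF v w] by simp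
  also have "\<dots> = of_real ((cmod (w \<bullet>c v))^2)" by (simp add: complex_norm_square[symmetric])
  finally show ?thesis .
qed

lemma rank1_pos: "v \<in> carrier_vec n \<Longrightarrow> positive_op n (rank1 n v)"
  by (rule pos_opI) (auto simp: rank1_S)

lemma sum_list_zero_each: "(\<forall>x\<in>set xs. f x \<ge> (0::real)) \<Longrightarrow> (\<Sum>x\<leftarrow>xs. f x) = 0 \<Longrightarrow> y \<in> set xs \<Longrightarrow> f y = 0"
proof (induct xs)
  case (Cons a xs)
  have "(\<Sum>x\<leftarrow>xs. f x) \<ge> 0" by (rule sum_list_nonneg) (use Cons in auto)
  moreover have "f a \<ge> 0" using Cons by auto
  ultimately have "f a = 0" "(\<Sum>x\<leftarrow>xs. f x) = 0" using Cons(3) by auto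
  thus ?case using Cons by auto
qed simp

context proj
begin

lemma invariance:
  assumes Ms: "\<forall>M\<in>set Ms. M \<in> carrier_mat d d"
    and inv: "invariant_sub d Ms (proj_range d P)"
    and M: "M \<in> set Ms" and v: "v \<in> carrier_vec d" and Pv: "P *\<^sub>v v = v"
  shows "P *\<^sub>v (M *\<^sub>v v) = M *\<^sub>v v"
proof -
  let ?r = "rank1 d v"
  have Mc: "M \<in> carrier_mat d d" using Ms M by auto
  have suppr: "supp d ?r \<subseteq> proj_range d P"
  proof
    fix u assume u: "u \<in> supp d ?r"
    hence uc: "u \<in> carrier_vec d" and orth: "\<And>w. w \<in> mat_kernel ?r \<Longrightarrow> u \<bullet>c w = 0"
      unfolding supp_def by auto
    have "(Q *\<^sub>v u) \<bullet>c v = (Q *\<^sub>v u) \<bullet>c (P *\<^sub>v v)" using Pv by simp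
    also have "\<dots> = (P *\<^sub>v (Q *\<^sub>v u)) \<bullet>c v" using adjP[of "Q *\<^sub>v u" v] uc v by simp
    also have "\<dots> = 0" using uc v by simp
    finally have "?r *\<^sub>v (Q *\<^sub>v u) = 0\<^sub>v d" using uc v by (simp add: rank1_mv) (rule eq_vecI, auto)
    hence "Q *\<^sub>v u \<in> mat_kernel ?r" by (intro mat_kernelI[of _ d d]) auto
    hence "u \<bullet>c (Q *\<^sub>v u) = 0" by (rule orth)
    hence "S Q u u = 0" unfolding S_def using csp_cnj[of "Q *\<^sub>v u" d u] uc by simp
    hence "nrm2 (Q *\<^sub>v u) = 0" using ReQ[OF uc] by simp
    hence "Q *\<^sub>v u = 0\<^sub>v d" using nrm2_0[of "Q *\<^sub>v u" d] by simp
    hence "P *\<^sub>v u = u" using decomp[OF uc] uc by simp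
    thus "u \<in> proj_range d P" using uc unfolding proj_range_def by simp
  qed
  have "supp d (kraus_map d Ms ?r) \<subseteq> proj_range d P"
    using inv suppr rank1_pos[OF v] unfolding invariant_sub_def by blast
  moreover have "M *\<^sub>v v \<in> supp d (kraus_map d Ms ?r)"
    unfolding supp_def
  proof (intro CollectI conjI ballI)
    show "M *\<^sub>v v \<in> carrier_vec d" using Mc v by simp
    fix w assume w: "w \<in> mat_kernel (kraus_map d Ms ?r)"
    have Tc: "kraus_map d Ms ?r \<in> carrier_mat d d" by (rule map_carrier[OF Ms]) simp
    have wc: "w \<in> carrier_vec d" using w Tc mat_kernelD by blast
    have "kraus_map d Ms ?r *\<^sub>v w = 0\<^sub>v d" using w Tc mat_kernelD by blast
    hence "S (kraus_map d Ms ?r) w w = 0" unfolding S_def using wc by simp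
    hence "(\<Sum>M'\<leftarrow>Ms. Re (S ?r (mat_adjoint M' *\<^sub>v w) (mat_adjoint M' *\<^sub>v w))) = 0"
      unfolding map_S[OF Ms rank1_carrier wc wc] sum_list_Re[symmetric] by simp
    hence "Re (S ?r (mat_adjoint M *\<^sub>v w) (mat_adjoint M *\<^sub>v w)) = 0"
      apply -
      apply (rule sum_list_zero_each[where f = "\<lambda>M'. Re (S ?r (mat_adjoint M' *\<^sub>v w) (mat_adjoint M' *\<^sub>v w))", OF _ _ M])
      using Ms v wc by (auto simp: rank1_S)
    hence "(mat_adjoint M *\<^sub>v w) \<bullet>c v = 0" using Mc wc v by (simp add: rank1_S)
    hence "w \<bullet>c (M *\<^sub>v v) = 0" using adj_sprod[of "mat_adjoint M" d d w v] Mc wc v by simp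
    thus "(M *\<^sub>v v) \<bullet>c w = 0" using csp_cnj[of "M *\<^sub>v v" d w] Mc v wc by simp
  qed
  ultimately show ?thesis unfolding proj_range_def by auto
qed

end


locale main = proj +
  fixes Ms :: "complex mat list"
  assumes K: "kraus_ops d Ms"
    and inv: "invariant_sub d Ms (proj_range d P)"
begin

abbreviation "Td \<equiv> kraus_dual d Ms"
abbreviation "Tm \<equiv> kraus_map d Ms"
definition "Pn n = (Td ^^ n) P"
definition "Bn n = (Td ^^ n) Q"

lemma Ms: "\<forall>M\<in>set Ms. M \<in> carrier_mat d d" using K unfolding kraus_ops_def by auto

lemma Mv[simp]: "M \<in> set Ms \<Longrightarrow> v \<in> carrier_vec d \<Longrightarrow> M *\<^sub>v v \<in> carrier_vec d"
  using Ms by (auto intro: mult_mat_vec_carrier)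

lemma Pn_c[simp]: "Pn n \<in> carrier_mat d d" unfolding Pn_def by (rule dual_pow_carrier[OF Ms]) simp
lemma Bn_c[simp]: "Bn n \<in> carrier_mat d d" unfolding Bn_def by (rule dual_pow_carrier[OF Ms]) simp
lemma Pn_pos: "positive_op d (Pn n)" unfolding Pn_def by (rule dual_pow_pos[OF Ms posP])
lemma Bn_pos: "positive_op d (Bn n)" unfolding Bn_def by (rule dual_pow_pos[OF Ms posQ])

lemma step_Re: assumes A: "A \<in> carrier_mat d d" and v: "v \<in> carrier_vec d"
  shows "Re (S ((Td ^^ Suc n) A) v v) = (\<Sum>M\<leftarrow>Ms. Re (S ((Td ^^ n) A) (M *\<^sub>v v) (M *\<^sub>v v)))"
proof -
  have "S ((Td ^^ Suc n) A) v v = S (Td ((Td ^^ n) A)) v v" by simp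
  also have "\<dots> = (\<Sum>M\<leftarrow>Ms. S ((Td ^^ n) A) (M *\<^sub>v v) (M *\<^sub>v v))"
    by (rule dual_S[OF Ms dual_pow_carrier[OF Ms A] v v])
  finally show ?thesis by (simp add: sum_list_Re)
qed

lemma PB_sum: "v \<in> carrier_vec d \<Longrightarrow> Re (S (Pn n) v v) + Re (S (Bn n) v v) = nrm2 v"
proof (induct n arbitrary: v)
  case 0
  then show ?case unfolding Pn_def Bn_def using Re_PQ by simp
next
  case (Suc n)
  have "Re (S (Pn (Suc n)) v v) + Re (S (Bn (Suc n)) v v) =
     (\<Sum>M\<leftarrow>Ms. Re (S (Pn n) (M *\<^sub>v v) (M *\<^sub>v v)) + Re (S (Bn n) (M *\<^sub>v v) (M *\<^sub>v v)))"
    unfolding Pn_def Bn_def step_Re[OF Pc Suc(2)] step_Re[OF Qc Suc(2)] sum_list_addf ..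
  also have "\<dots> = (\<Sum>M\<leftarrow>Ms. nrm2 (M *\<^sub>v v))"
    by (rule arg_cong[where f = sum_list], rule map_cong) (use Suc in auto)
  also have "\<dots> = nrm2 v" by (rule kraus_norm[OF K Suc(2)])
  finally show ?case .
qed

lemma B_range: "s \<in> carrier_vec d \<Longrightarrow> P *\<^sub>v s = s \<Longrightarrow> Re (S (Bn n) s s) = 0"
proof (induct n arbitrary: s)
  case 0
  then show ?case unfolding Bn_def using ReQ[of s] Q_range[of s] nrm2_0[of "0\<^sub>v d" d] by simp
next
  case (Suc n)
  have "Re (S (Bn (Suc n)) s s) = (\<Sum>M\<leftarrow>Ms. Re (S (Bn n) (M *\<^sub>v s) (M *\<^sub>v s)))"
    unfolding Bn_def step_Re[OF Qc Suc(2)] ..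
  also have "\<dots> = (\<Sum>M\<leftarrow>Ms. 0)"
    by (rule arg_cong[where f = sum_list], rule map_cong)
       (use Suc invariance[OF Ms inv] in auto)
  finally show ?case by simp
qed

lemma B_Q: assumes v: "v \<in> carrier_vec d"
  shows "S (Bn n) v v = S (Bn n) (Q *\<^sub>v v) (Q *\<^sub>v v)"
proof -
  have pv: "P *\<^sub>v v \<in> carrier_vec d" "Q *\<^sub>v v \<in> carrier_vec d" using v by auto
  have z: "Re (S (Bn n) (P *\<^sub>v v) (P *\<^sub>v v)) = 0" using v by (intro B_range) auto
  have "S (Bn n) v v = S (Bn n) (P *\<^sub>v v + Q *\<^sub>v v) (P *\<^sub>v v + Q *\<^sub>v v)"
    using decomp[OF v] by simp
  also have "\<dots> = S (Bn n) (Q *\<^sub>v v) (Q *\<^sub>v v)"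
    using pos_Im[OF Bn_pos pv(1), of n] z
    unfolding S_expand[OF Bn_c pv] pos_S_zero[OF Bn_pos pv(2) pv(1) z] by (simp add: complex_eq_iff)
  finally show ?thesis .
qed

lemma mono_pow: assumes A: "A \<in> carrier_mat d d" and A': "A' \<in> carrier_mat d d"
  and le: "\<And>v. v \<in> carrier_vec d \<Longrightarrow> Re (S A v v) \<le> c * Re (S A' v v)"
  and v: "v \<in> carrier_vec d"
  shows "Re (S ((Td ^^ n) A) v v) \<le> c * Re (S ((Td ^^ n) A') v v)"
  using v
proof (induct n arbitrary: v)
  case 0
  then show ?case using le by simp
next
  case (Suc n)
  have "Re (S ((Td ^^ Suc n) A) v v) = (\<Sum>M\<leftarrow>Ms. Re (S ((Td ^^ n) A) (M *\<^sub>v v) (M *\<^sub>v v)))"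
    by (rule step_Re[OF A Suc(2)])
  also have "\<dots> \<le> (\<Sum>M\<leftarrow>Ms. c * Re (S ((Td ^^ n) A') (M *\<^sub>v v) (M *\<^sub>v v)))"
    by (rule sum_list_mono) (use Suc in auto)
  also have "\<dots> = c * Re (S ((Td ^^ Suc n) A') v v)"
    unfolding step_Re[OF A' Suc(2)] sum_list_const_mult ..
  finally show ?case .
qed

lemma B1_le: assumes v: "v \<in> carrier_vec d" shows "Re (S (Td Q) v v) \<le> 1 * Re (S Q v v)"
proof -
  have qv: "Q *\<^sub>v v \<in> carrier_vec d" using v by simp
  have "Re (S (Td Q) v v) = Re (S (Bn 1) (Q *\<^sub>v v) (Q *\<^sub>v v))"
    using B_Q[OF v, of 1] unfolding Bn_def by simp
  also have "\<dots> = (\<Sum>M\<leftarrow>Ms. Re (S Q (M *\<^sub>v (Q *\<^sub>v v)) (M *\<^sub>v (Q *\<^sub>v v))))"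
    unfolding Bn_def using step_Re[OF Qc qv, of 0] by simp
  also have "\<dots> \<le> (\<Sum>M\<leftarrow>Ms. nrm2 (M *\<^sub>v (Q *\<^sub>v v)))"
    by (rule sum_list_mono) (use qv in \<open>auto intro: ReQ_le\<close>)
  also have "\<dots> = nrm2 (Q *\<^sub>v v)" by (rule kraus_norm[OF K qv])
  also have "\<dots> = Re (S Q v v)" using ReQ[OF v] by simp
  finally show ?thesis by simp
qed

lemma B_dec: "v \<in> carrier_vec d \<Longrightarrow> Re (S (Bn (Suc n)) v v) \<le> Re (S (Bn n) v v)"
proof -
  assume v: "v \<in> carrier_vec d"
  have "Bn (Suc n) = (Td ^^ n) (Td Q)" unfolding Bn_def by (simp add: funpow_swap1)
  hence "Re (S (Bn (Suc n)) v v) \<le> 1 * Re (S ((Td ^^ n) Q) v v)"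
    using mono_pow[OF dual_carrier[OF Ms Qc] Qc B1_le v] by simp
  thus ?thesis unfolding Bn_def by simp
qed

lemma B_antimono: "m \<le> n \<Longrightarrow> v \<in> carrier_vec d \<Longrightarrow> Re (S (Bn n) v v) \<le> Re (S (Bn m) v v)"
proof (induct n)
  case 0 then show ?case by simp
next
  case (Suc n)
  show ?case
  proof (cases "m = Suc n")
    case False
    hence "m \<le> n" using Suc by simp
    thus ?thesis using Suc B_dec[of v n] by simp
  qed simp
qed

end


lemma pos_ker: "positive_op n A \<Longrightarrow> w \<in> carrier_vec n \<Longrightarrow> A *\<^sub>v w = 0\<^sub>v n \<longleftrightarrow> Re (S A w w) = 0"
  using pos_zero[of n A w] unfolding S_def by auto

lemma pos_supp_perp: assumes P: "positive_op n A" and w: "w \<in> carrier_vec n"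
  and perp: "\<forall>v\<in>supp n A. v \<bullet>c w = 0"
  shows "A *\<^sub>v w = 0\<^sub>v n"
proof -
  have A: "A \<in> carrier_mat n n" using P by (rule pos_carrier)
  have Aw: "A *\<^sub>v w \<in> carrier_vec n" using A w by simp
  have "A *\<^sub>v w \<in> supp n A"
    unfolding supp_def
  proof (intro CollectI conjI ballI Aw)
    fix x assume x: "x \<in> mat_kernel A"
    have xc: "x \<in> carrier_vec n" and Ax: "A *\<^sub>v x = 0\<^sub>v n" using mat_kernelD[OF A x] by auto
    have "(A *\<^sub>v w) \<bullet>c x = S A w x" unfolding S_def ..
    also have "\<dots> = cnj (S A x w)" using pos_herm[OF P xc w] .
    also have "S A x w = 0" unfolding S_def Ax using w by simp
    finally show "(A *\<^sub>v w) \<bullet>c x = 0" by simp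
  qed
  hence "S A w w = 0" using perp unfolding S_def by auto
  thus ?thesis using pos_zero[OF P w] by simp
qed

context main
begin

lemma Pn_Suc: "Pn (Suc n) = Td (Pn n)" unfolding Pn_def by simp

lemma ker_Td: assumes A: "positive_op d A" and w: "w \<in> carrier_vec d"
  shows "Td A *\<^sub>v w = 0\<^sub>v d \<longleftrightarrow> (\<forall>M\<in>set Ms. A *\<^sub>v (M *\<^sub>v w) = 0\<^sub>v d)"
proof -
  have Ac: "A \<in> carrier_mat d d" using A by (rule pos_carrier)
  have e: "Re (S (Td A) w w) = (\<Sum>M\<leftarrow>Ms. Re (S A (M *\<^sub>v w) (M *\<^sub>v w)))"
    unfolding dual_S[OF Ms Ac w w] sum_list_Re ..
  have nn: "\<forall>M\<in>set Ms. Re (S A (M *\<^sub>v w) (M *\<^sub>v w)) \<ge> 0" using w by (auto intro: pos_Re[OF A])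
  have "Td A *\<^sub>v w = 0\<^sub>v d \<longleftrightarrow> Re (S (Td A) w w) = 0" by (rule pos_ker[OF dual_pos[OF Ms A] w])
  also have "\<dots> \<longleftrightarrow> (\<forall>M\<in>set Ms. Re (S A (M *\<^sub>v w) (M *\<^sub>v w)) = 0)"
  proof
    assume "Re (S (Td A) w w) = 0"
    hence z: "(\<Sum>M\<leftarrow>Ms. Re (S A (M *\<^sub>v w) (M *\<^sub>v w))) = 0" using e by simp
    show "\<forall>M\<in>set Ms. Re (S A (M *\<^sub>v w) (M *\<^sub>v w)) = 0"
      using sum_list_zero_each[where f = "\<lambda>M. Re (S A (M *\<^sub>v w) (M *\<^sub>v w))", OF nn z] by blast
  next
    assume "\<forall>M\<in>set Ms. Re (S A (M *\<^sub>v w) (M *\<^sub>v w)) = 0"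
    hence "(\<Sum>M\<leftarrow>Ms. Re (S A (M *\<^sub>v w) (M *\<^sub>v w))) = (\<Sum>M\<leftarrow>Ms. 0)"
      by (intro arg_cong[where f = sum_list] map_cong) auto
    thus "Re (S (Td A) w w) = 0" using e by simp
  qed
  also have "\<dots> \<longleftrightarrow> (\<forall>M\<in>set Ms. A *\<^sub>v (M *\<^sub>v w) = 0\<^sub>v d)"
    using pos_ker[OF A] w by auto
  finally show ?thesis .
qed

lemma P_inc: "v \<in> carrier_vec d \<Longrightarrow> Re (S (Pn n) v v) \<le> Re (S (Pn (Suc n)) v v)"
  using PB_sum[of v n] PB_sum[of v "Suc n"] B_dec[of v n] by simp

lemma ker_mono: "w \<in> carrier_vec d \<Longrightarrow> Pn (Suc n) *\<^sub>v w = 0\<^sub>v d \<Longrightarrow> Pn n *\<^sub>v w = 0\<^sub>v d"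
  using pos_ker[OF Pn_pos, of w "Suc n"] pos_ker[OF Pn_pos, of w n] P_inc[of w n] pos_Re[OF Pn_pos, of w n]
  by auto

lemma ker_stable: assumes eq: "\<forall>w\<in>carrier_vec d. Pn n *\<^sub>v w = 0\<^sub>v d \<longleftrightarrow> Pn (Suc n) *\<^sub>v w = 0\<^sub>v d"
  shows "\<forall>w\<in>carrier_vec d. Pn (Suc n) *\<^sub>v w = 0\<^sub>v d \<longleftrightarrow> Pn (Suc (Suc n)) *\<^sub>v w = 0\<^sub>v d"
proof
  fix w :: "complex vec" assume w: "w \<in> carrier_vec d"
  have "Pn (Suc (Suc n)) *\<^sub>v w = 0\<^sub>v d \<longleftrightarrow> (\<forall>M\<in>set Ms. Pn (Suc n) *\<^sub>v (M *\<^sub>v w) = 0\<^sub>v d)"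
    unfolding Pn_Suc[of "Suc n"] by (rule ker_Td[OF Pn_pos w])
  also have "\<dots> \<longleftrightarrow> (\<forall>M\<in>set Ms. Pn n *\<^sub>v (M *\<^sub>v w) = 0\<^sub>v d)"
    using eq w by auto
  also have "\<dots> \<longleftrightarrow> Pn (Suc n) *\<^sub>v w = 0\<^sub>v d"
    unfolding Pn_Suc[of n] by (rule ker_Td[OF Pn_pos w, symmetric])
  finally show "Pn (Suc n) *\<^sub>v w = 0\<^sub>v d \<longleftrightarrow> Pn (Suc (Suc n)) *\<^sub>v w = 0\<^sub>v d" by simp
qed

lemma ker_stable_all: assumes eq: "\<forall>w\<in>carrier_vec d. Pn n *\<^sub>v w = 0\<^sub>v d \<longleftrightarrow> Pn (Suc n) *\<^sub>v w = 0\<^sub>v d"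
  shows "\<forall>w\<in>carrier_vec d. Pn n *\<^sub>v w = 0\<^sub>v d \<longleftrightarrow> Pn (n + k) *\<^sub>v w = 0\<^sub>v d"
proof (induct k)
  case 0 then show ?case by simp
next
  case (Suc k)
  have "\<forall>w\<in>carrier_vec d. Pn (n + k) *\<^sub>v w = 0\<^sub>v d \<longleftrightarrow> Pn (Suc (n + k)) *\<^sub>v w = 0\<^sub>v d"
  proof (induct k)
    case 0 then show ?case using eq by simp
  next
    case (Suc k) then show ?case using ker_stable[of "n + k"] by simp
  qed
  then show ?case using Suc by simp
qed

definition "triv N \<longleftrightarrow> (\<forall>w\<in>carrier_vec d. Pn N *\<^sub>v w = 0\<^sub>v d \<longrightarrow> w = 0\<^sub>v d)"

lemma supp_full_iff: "supp d (Pn N) = carrier_vec d \<longleftrightarrow> triv N"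
proof
  assume full: "supp d (Pn N) = carrier_vec d"
  show "triv N" unfolding triv_def
  proof (intro ballI impI)
    fix w assume w: "w \<in> carrier_vec d" and z: "Pn N *\<^sub>v w = 0\<^sub>v d"
    have "w \<in> mat_kernel (Pn N)" by (rule mat_kernelI[OF Pn_c w z])
    moreover have "w \<in> supp d (Pn N)" using full w by simp
    ultimately have "w \<bullet>c w = 0" unfolding supp_def by auto
    thus "w = 0\<^sub>v d" using w by simp
  qed
next
  assume t: "triv N"
  show "supp d (Pn N) = carrier_vec d"
  proof
    show "supp d (Pn N) \<subseteq> carrier_vec d" unfolding supp_def by auto
    show "carrier_vec d \<subseteq> supp d (Pn N)"
    proof
      fix v :: "complex vec" assume v: "v \<in> carrier_vec d"
      { fix w assume "w \<in> mat_kernel (Pn N)"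
        hence "w \<in> carrier_vec d" "Pn N *\<^sub>v w = 0\<^sub>v d" using mat_kernelD[OF Pn_c] by auto
        hence "w = 0\<^sub>v d" using t unfolding triv_def by auto
        hence "v \<bullet>c w = 0" using v by simp }
      thus "v \<in> supp d (Pn N)" using v unfolding supp_def by auto
    qed
  qed
qed

lemma supp_mono: "supp d (Pn n) \<subseteq> supp d (Pn (Suc n))"
  unfolding supp_def
proof (intro subsetI CollectI conjI ballI)
  fix v assume v: "v \<in> {v \<in> carrier_vec d. \<forall>w\<in>mat_kernel (Pn n). v \<bullet>c w = 0}"
  show "v \<in> carrier_vec d" using v by auto
  fix w assume w: "w \<in> mat_kernel (Pn (Suc n))"
  hence "w \<in> carrier_vec d" "Pn (Suc n) *\<^sub>v w = 0\<^sub>v d" using mat_kernelD[OF Pn_c] by auto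
  hence "w \<in> mat_kernel (Pn n)" using ker_mono by (intro mat_kernelI[OF Pn_c]) auto
  thus "v \<bullet>c w = 0" using v by auto
qed

lemma supp_eq_ker: assumes eq: "supp d (Pn n) = supp d (Pn (Suc n))"
  shows "\<forall>w\<in>carrier_vec d. Pn n *\<^sub>v w = 0\<^sub>v d \<longleftrightarrow> Pn (Suc n) *\<^sub>v w = 0\<^sub>v d"
proof (intro ballI iffI)
  fix w :: "complex vec" assume w: "w \<in> carrier_vec d"
  { assume "Pn (Suc n) *\<^sub>v w = 0\<^sub>v d" thus "Pn n *\<^sub>v w = 0\<^sub>v d" using ker_mono w by auto }
  assume z: "Pn n *\<^sub>v w = 0\<^sub>v d"
  have "w \<in> mat_kernel (Pn n)" by (rule mat_kernelI[OF Pn_c w z])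
  hence "\<forall>v\<in>supp d (Pn (Suc n)). v \<bullet>c w = 0" using eq unfolding supp_def by auto
  thus "Pn (Suc n) *\<^sub>v w = 0\<^sub>v d" by (rule pos_supp_perp[OF Pn_pos w])
qed

lemma chain_iff: "(\<exists>N. (\<forall>n < N. supp d (Pn n) \<subset> supp d (Pn (Suc n))) \<and> supp d (Pn N) = carrier_vec d)
  \<longleftrightarrow> (\<exists>N. triv N)"
proof
  assume "\<exists>N. (\<forall>n < N. supp d (Pn n) \<subset> supp d (Pn (Suc n))) \<and> supp d (Pn N) = carrier_vec d"
  thus "\<exists>N. triv N" using supp_full_iff by blast
next
  assume "\<exists>N. triv N"
  define N where "N = (LEAST N. triv N)"
  have tN: "triv N" unfolding N_def using \<open>\<exists>N. triv N\<close> by (metis LeastI)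
  have "\<forall>n < N. supp d (Pn n) \<subset> supp d (Pn (Suc n))"
  proof (intro allI impI)
    fix n assume n: "n < N"
    have nt: "\<not> triv n" using n unfolding N_def using not_less_Least by blast
    show "supp d (Pn n) \<subset> supp d (Pn (Suc n))"
    proof (rule ccontr)
      assume "\<not> ?thesis"
      hence "supp d (Pn n) = supp d (Pn (Suc n))" using supp_mono[of n] by auto
      hence "\<forall>w\<in>carrier_vec d. Pn n *\<^sub>v w = 0\<^sub>v d \<longleftrightarrow> Pn (n + (N - n)) *\<^sub>v w = 0\<^sub>v d"
        by (intro ker_stable_all supp_eq_ker)
      hence "triv n" using tN n unfolding triv_def by auto
      thus False using nt by simp
    qed
  qed
  thus "\<exists>N. (\<forall>n < N. supp d (Pn n) \<subset> supp d (Pn (Suc n))) \<and> supp d (Pn N) = carrier_vec d"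
    using tN supp_full_iff by blast
qed

end


lemma nrm2_sum: "v \<in> carrier_vec n \<Longrightarrow> nrm2 v = (\<Sum>i<n. (cmod (v $ i))^2)"
proof -
  assume v: "v \<in> carrier_vec n"
  have "v \<bullet>c v = (\<Sum>i<n. v $ i * cnj (v $ i))" using v by (intro cscalar_sum) auto
  also have "\<dots> = (\<Sum>i<n. of_real ((cmod (v $ i))^2))"
    by (intro sum.cong refl) (simp add: complex_norm_square[symmetric])
  finally show ?thesis unfolding nrm2_def by simp
qed

lemma comp_le: assumes v: "v \<in> carrier_vec n" and i: "i < n"
  shows "(cmod (v $ i))^2 \<le> nrm2 v"
proof -
  have "(cmod (v $ i))^2 \<le> (\<Sum>k<n. (cmod (v $ k))^2)"
    by (rule member_le_sum) (use i in auto)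
  thus ?thesis using nrm2_sum[OF v] by simp
qed

lemma comp_le2: assumes v: "v \<in> carrier_vec n" and i: "i < n" and j: "j < n"
  shows "cmod (v $ i) * cmod (v $ j) \<le> nrm2 v"
proof -
  have "cmod (v $ i) * cmod (v $ j) \<le> ((cmod (v $ i))^2 + (cmod (v $ j))^2) / 2"
    using sum_squares_bound[of "cmod (v $ i)" "cmod (v $ j)"] by (simp add: power2_eq_square)
  also have "\<dots> \<le> nrm2 v" using comp_le[OF v i] comp_le[OF v j] by simp
  finally show ?thesis .
qed

lemma GB: assumes X: "X \<in> carrier_mat n n" and v: "v \<in> carrier_vec n"
  shows "cmod (S X v v) \<le> (\<Sum>i<n. \<Sum>j<n. cmod (X $$ (i,j))) * nrm2 v"
proof -
  have "cmod (S X v v) = cmod (\<Sum>i<n. \<Sum>j<n. X $$ (i,j) * v $ j * cnj (v $ i))"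
    using S_sum[OF X v v] by simp
  also have "\<dots> \<le> (\<Sum>i<n. cmod (\<Sum>j<n. X $$ (i,j) * v $ j * cnj (v $ i)))"
    by (rule norm_sum)
  also have "\<dots> \<le> (\<Sum>i<n. \<Sum>j<n. cmod (X $$ (i,j) * v $ j * cnj (v $ i)))"
    by (intro sum_mono norm_sum)
  also have "\<dots> \<le> (\<Sum>i<n. \<Sum>j<n. cmod (X $$ (i,j)) * nrm2 v)"
  proof (intro sum_mono)
    fix i j assume i: "i \<in> {..<n}" and j: "j \<in> {..<n}"
    have "cmod (X $$ (i,j) * v $ j * cnj (v $ i)) = cmod (X $$ (i,j)) * (cmod (v $ j) * cmod (v $ i))"
      by (simp add: norm_mult)
    also have "\<dots> \<le> cmod (X $$ (i,j)) * nrm2 v"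
      using comp_le2[OF v, of j i] i j by (intro mult_left_mono) auto
    finally show "cmod (X $$ (i,j) * v $ j * cnj (v $ i)) \<le> cmod (X $$ (i,j)) * nrm2 v" .
  qed
  also have "\<dots> = (\<Sum>i<n. \<Sum>j<n. cmod (X $$ (i,j))) * nrm2 v"
    by (simp add: sum_distrib_right)
  finally show ?thesis .
qed

lemma mtrace_mult: assumes "A \<in> carrier_mat n n" "R \<in> carrier_mat n n"
  shows "mtrace (A * R) = (\<Sum>i<n. \<Sum>j<n. A $$ (i,j) * R $$ (j,i))"
  unfolding mtrace_def using assms
  by (auto simp: scalar_prod_def atLeast0LessThan intro!: sum.cong)

lemma S_minus_mat: assumes "A \<in> carrier_mat n n" "B \<in> carrier_mat n n" "x \<in> carrier_vec n" "y \<in> carrier_vec n"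
  shows "S (A - B) x y = S A x y - S B x y"
  unfolding S_def using assms
  by (simp add: minus_mult_distrib_mat_vec[of _ n n] csp_minus1[of _ n])

lemma pos_one: "positive_op n (1\<^sub>m n)"
  by (rule pos_opI) (auto simp: S_one cnorm_real nrm2_ge)

lemma csp_CS: "x \<in> carrier_vec n \<Longrightarrow> y \<in> carrier_vec n \<Longrightarrow> (cmod (x \<bullet>c y))^2 \<le> nrm2 x * nrm2 y"
  using pos_CS[OF pos_one, of x n y] by (simp add: S_one nrm2_def)

lemma diag_le_trace: assumes X: "positive_op n X" and i: "i < n"
  shows "Re (X $$ (i,i)) \<le> Re (mtrace X)"
proof -
  have Xc: "X \<in> carrier_mat n n" using X by (rule pos_carrier)
  have "Re (mtrace X) = (\<Sum>k<n. Re (X $$ (k,k)))" unfolding mtrace_def using Xc by simp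
  also have "\<dots> \<ge> Re (X $$ (i,i))"
  proof (rule member_le_sum)
    fix k assume "k \<in> {..<n} - {i}"
    hence k: "k < n" by auto
    show "0 \<le> Re (X $$ (k,k))" using pos_Re[OF X, of "unit_vec n k"] S_unit[OF Xc k k] by simp
  qed (use i in auto)
  finally show ?thesis .
qed

lemma entry_CS: assumes X: "positive_op n X" and i: "i < n" and j: "j < n"
  shows "(cmod (X $$ (i,j)))^2 \<le> Re (X $$ (j,j)) * Re (X $$ (i,i))"
proof -
  have Xc: "X \<in> carrier_mat n n" using X by (rule pos_carrier)
  show ?thesis using pos_CS[OF X, of "unit_vec n j" "unit_vec n i"] i j by (simp add: S_unit[OF Xc])
qed



lemma entry_le_mnorm: assumes Y: "Y \<in> carrier_mat n n" and i: "i < n" and j: "j < n"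
  shows "cmod (Y $$ (i,j)) \<le> mnorm Y"
proof -
  have "(cmod (Y $$ (i,j)))^2 \<le> (\<Sum>j'<n. (cmod (Y $$ (i,j')))^2)"
    by (rule member_le_sum) (use j in auto)
  also have "\<dots> \<le> (\<Sum>i'<n. \<Sum>j'<n. (cmod (Y $$ (i',j')))^2)"
    by (rule member_le_sum[where f = "\<lambda>i'. \<Sum>j'<n. (cmod (Y $$ (i',j')))^2"]) (use i in \<open>auto intro: sum_nonneg\<close>)
  finally have "sqrt ((cmod (Y $$ (i,j)))^2) \<le> mnorm Y"
    unfolding mnorm_def using Y by (intro real_sqrt_le_mono) auto
  thus ?thesis by simp
qed

lemma mnorm_ge: "mnorm Y \<ge> 0"
  unfolding mnorm_def by (intro real_sqrt_ge_zero sum_nonneg) auto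

lemma trace_le_mnorm: assumes Y: "Y \<in> carrier_mat n n"
  shows "cmod (mtrace Y) \<le> real n * mnorm Y"
proof -
  have "cmod (mtrace Y) \<le> (\<Sum>i<n. cmod (Y $$ (i,i)))" unfolding mtrace_def using Y by (simp add: norm_sum)
  also have "\<dots> \<le> (\<Sum>i<n. mnorm Y)" by (rule sum_mono) (use entry_le_mnorm[OF Y] in auto)
  finally show ?thesis by simp
qed

lemma rank1_unit_entry: "a < n \<Longrightarrow> b < n \<Longrightarrow> i < n \<Longrightarrow> rank1 n (unit_vec n i) $$ (a,b) = (if a = i \<and> b = i then 1 else 0)"
  unfolding rank1_def by (auto simp: unit_vec_def)

lemma trace_rank1_unit: assumes B: "B \<in> carrier_mat n n" and i: "i < n"
  shows "mtrace (B * rank1 n (unit_vec n i)) = B $$ (i,i)"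
proof -
  have "mtrace (B * rank1 n (unit_vec n i)) = (\<Sum>a<n. \<Sum>b<n. B $$ (a,b) * rank1 n (unit_vec n i) $$ (b,a))"
    by (rule mtrace_mult[OF B]) simp
  also have "\<dots> = (\<Sum>a<n. if a = i then B $$ (a,i) else 0)"
  proof (rule sum.cong[OF refl])
    fix a assume a: "a \<in> {..<n}"
    have "(\<Sum>b<n. B $$ (a,b) * rank1 n (unit_vec n i) $$ (b,a)) = (\<Sum>b<n. if b = i then (if a = i then B $$ (a,i) else 0) else 0)"
      by (rule sum.cong[OF refl]) (use a i in \<open>auto simp: rank1_unit_entry\<close>)
    also have "\<dots> = (if a = i then B $$ (a,i) else 0)" using i by simp
    finally show "(\<Sum>b<n. B $$ (a,b) * rank1 n (unit_vec n i) $$ (b,a)) = (if a = i then B $$ (a,i) else 0)" .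
  qed
  also have "\<dots> = B $$ (i,i)" using i by simp
  finally show ?thesis .
qed

lemma rank1_unit_density: assumes i: "i < n" shows "density_op n (rank1 n (unit_vec n i))"
proof -
  have "mtrace (rank1 n (unit_vec n i)) = (\<Sum>a<n. if a = i then 1 else 0)"
    unfolding mtrace_def by (rule sum.cong) (auto simp: rank1_def unit_vec_def)
  also have "\<dots> = 1" using i by simp
  finally show ?thesis unfolding density_op_def using rank1_pos[of "unit_vec n i" n] by simp
qed

context main
begin

lemma QQ: "Q * Q = Q"
proof (rule eq_matI)
  fix i j assume "i < dim_row Q" "j < dim_col Q"
  hence ij: "i < d" "j < d" by auto
  have "(Q * Q) $$ (i,j) = S (Q * Q) (unit_vec d j) (unit_vec d i)"
    by (rule S_unit[symmetric]) (use ij in auto)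
  also have "\<dots> = S Q (unit_vec d j) (unit_vec d i)"
    unfolding S_def using assoc_mult_mat_vec[of Q d d Q d "unit_vec d j"] by simp
  also have "\<dots> = Q $$ (i,j)" using S_unit[OF Qc ij] .
  finally show "(Q * Q) $$ (i,j) = Q $$ (i,j)" .
qed auto

lemma trace_Y: assumes X: "X \<in> carrier_mat d d"
  shows "mtrace (X - P * X * P) = mtrace (Q * X)"
proof -
  have "mtrace (P * X * P) = mtrace (P * (P * X))" by (rule mtrace_comm[of _ d d]) (use X in auto)
  also have "\<dots> = mtrace (P * X)" using X PP by (simp add: assoc_mult_mat[of P d d P d X d, symmetric])
  finally have e: "mtrace (P * X * P) = mtrace (P * X)" .
  have "Q * X = X - P * X" unfolding Q_def using X by (simp add: minus_mult_distrib_mat[of _ d d])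
  moreover have "mtrace (X - P * X) = mtrace X - mtrace (P * X)" by (rule mtrace_minus) (use X in auto)
  ultimately have "mtrace (Q * X) = mtrace X - mtrace (P * X)" by simp
  moreover have "mtrace (X - P * X * P) = mtrace X - mtrace (P * X * P)" by (rule mtrace_minus) (use X in auto)
  ultimately show ?thesis using e by simp
qed

lemma Bn_Re_diag: "i < d \<Longrightarrow> Re (S (Bn n) (unit_vec d i) (unit_vec d i)) = Re (Bn n $$ (i,i))"
  using S_unit[OF Bn_c] by simp

lemma GAS_diag: assumes G: "GAS d Ms P" and i: "i < d"
  shows "(\<lambda>n. Bn n $$ (i,i)) \<longlonglongrightarrow> 0"
proof -
  let ?r = "rank1 d (unit_vec d i)"
  define X where "X n = (Tm ^^ n) ?r" for n
  have Xc: "X n \<in> carrier_mat d d" for n unfolding X_def by (rule map_pow_carrier[OF Ms]) simp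
  have lim: "(\<lambda>n. mnorm (X n - P * X n * P)) \<longlonglongrightarrow> 0"
    using G rank1_unit_density[OF i] unfolding GAS_def X_def by blast
  have e: "Bn n $$ (i,i) = mtrace (X n - P * X n * P)" for n
  proof -
    have "mtrace (X n - P * X n * P) = mtrace (Q * X n)" by (rule trace_Y[OF Xc])
    also have "\<dots> = mtrace (Bn n * ?r)" unfolding X_def Bn_def
      by (rule trace_dual_pow[OF Ms Qc]) simp
    also have "\<dots> = Bn n $$ (i,i)" by (rule trace_rank1_unit[OF Bn_c i])
    finally show ?thesis by simp
  qed
  have Yc: "X n - P * X n * P \<in> carrier_mat d d" for n using Xc[of n] by (intro minus_carrier_mat) auto
  show ?thesis unfolding e
    by (rule tendsto_0_le[OF lim, where K = "real d"])
       (use trace_le_mnorm[OF Yc] mnorm_ge in \<open>auto simp: mult.commute intro!: always_eventually\<close>)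
qed

lemma GAS_triv: assumes G: "GAS d Ms P" shows "\<exists>N. triv N"
proof -
  have diag: "(\<lambda>n. Re (Bn n $$ (i,i))) \<longlonglongrightarrow> 0" if i: "i < d" for i
    using tendsto_Re[OF GAS_diag[OF G i]] by simp
  have ent: "(\<lambda>n. cmod (Bn n $$ (i,j))) \<longlonglongrightarrow> 0" if i: "i < d" and j: "j < d" for i j
  proof -
    have "(\<lambda>n. sqrt (Re (Bn n $$ (j,j)) * Re (Bn n $$ (i,i)))) \<longlonglongrightarrow> sqrt (0 * 0)"
      by (intro tendsto_real_sqrt tendsto_mult diag i j)
    hence l: "(\<lambda>n. sqrt (Re (Bn n $$ (j,j)) * Re (Bn n $$ (i,i)))) \<longlonglongrightarrow> 0" by simp
    show ?thesis
    proof (rule tendsto_sandwich[OF _ _ tendsto_const l])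
      show "\<forall>\<^sub>F n in sequentially. 0 \<le> cmod (Bn n $$ (i,j))" by simp
      show "\<forall>\<^sub>F n in sequentially. cmod (Bn n $$ (i,j)) \<le> sqrt (Re (Bn n $$ (j,j)) * Re (Bn n $$ (i,i)))"
        using entry_CS[OF Bn_pos i j] by (intro always_eventually allI real_le_rsqrt) simp
    qed
  qed
  have "(\<lambda>n. \<Sum>i<d. \<Sum>j<d. cmod (Bn n $$ (i,j))) \<longlonglongrightarrow> (\<Sum>i<d. \<Sum>j<d. 0)"
    by (intro tendsto_sum ent) auto
  hence "(\<lambda>n. \<Sum>i<d. \<Sum>j<d. cmod (Bn n $$ (i,j))) \<longlonglongrightarrow> 0" by simp
  hence "\<forall>\<^sub>F n in sequentially. (\<Sum>i<d. \<Sum>j<d. cmod (Bn n $$ (i,j))) < 1"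
    by (rule order_tendstoD) simp
  then obtain N where N: "(\<Sum>i<d. \<Sum>j<d. cmod (Bn N $$ (i,j))) < 1"
    by (auto simp: eventually_sequentially)
  have "triv N" unfolding triv_def
  proof (intro ballI impI)
    fix w :: "complex vec" assume w: "w \<in> carrier_vec d" and z: "Pn N *\<^sub>v w = 0\<^sub>v d"
    have "Re (S (Pn N) w w) = 0" using pos_ker[OF Pn_pos w] z by simp
    hence eq: "Re (S (Bn N) w w) = nrm2 w" using PB_sum[OF w, of N] by simp
    have "Re (S (Bn N) w w) \<le> cmod (S (Bn N) w w)" by (rule complex_Re_le_cmod)
    also have "\<dots> \<le> (\<Sum>i<d. \<Sum>j<d. cmod (Bn N $$ (i,j))) * nrm2 w" by (rule GB[OF Bn_c w])
    finally have "nrm2 w \<le> (\<Sum>i<d. \<Sum>j<d. cmod (Bn N $$ (i,j))) * nrm2 w" using eq by simp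
    hence "nrm2 w \<le> 0" using N nrm2_ge[of w] mult_right_mono[of "(\<Sum>i<d. \<Sum>j<d. cmod (Bn N $$ (i,j)))" 1 "nrm2 w"]
      by (smt (verit, best) mult_cancel_right1 mult_le_cancel_right1)
    hence "nrm2 w = 0" using nrm2_ge[of w] by simp
    thus "w = 0\<^sub>v d" using nrm2_0[OF w] by simp
  qed
  thus ?thesis by blast
qed

end


lemma inverse_ex: assumes A: "(A::complex mat) \<in> carrier_mat n n"
  and t: "\<forall>w\<in>carrier_vec n. A *\<^sub>v w = 0\<^sub>v n \<longrightarrow> w = 0\<^sub>v n"
  shows "\<exists>B\<in>carrier_mat n n. A * B = 1\<^sub>m n"
proof -
  have "det A \<noteq> 0" using det_0_iff_vec_prod_zero[OF A] t by blast
  from det_non_zero_imp_unit[OF A this, of "()"]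
  show ?thesis unfolding Units_def ring_mat_simps by auto
qed

lemma lower_bound: assumes Pos: "positive_op n A"
  and t: "\<forall>w\<in>carrier_vec n. A *\<^sub>v w = 0\<^sub>v n \<longrightarrow> w = 0\<^sub>v n"
  shows "\<exists>c>0. \<forall>v\<in>carrier_vec n. c * nrm2 v \<le> Re (S A v v)"
proof -
  have A: "A \<in> carrier_mat n n" using Pos by (rule pos_carrier)
  obtain B where B: "B \<in> carrier_mat n n" and AB: "A * B = 1\<^sub>m n" using inverse_ex[OF A t] by blast
  have BaB: "mat_adjoint B * B \<in> carrier_mat n n" using B by auto
  define C where "C = (\<Sum>i<n. \<Sum>j<n. cmod ((mat_adjoint B * B) $$ (i,j)))"
  define K where "K = sqrt C"
  have K0: "K \<ge> 0" unfolding K_def C_def by (intro real_sqrt_ge_zero sum_nonneg) auto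
  have main: "c * nrm2 v \<le> Re (S A v v)" if v: "v \<in> carrier_vec n" and c: "c = 1 / (K + 1)" for v c
  proof -
    have Bv: "B *\<^sub>v v \<in> carrier_vec n" using B v by simp
    define a where "a = nrm2 v"
    define q where "q = Re (S A v v)"
    define r where "r = Re (S A (B *\<^sub>v v) (B *\<^sub>v v))"
    have a0: "a \<ge> 0" unfolding a_def by (rule nrm2_ge)
    have q0: "q \<ge> 0" unfolding q_def using pos_Re[OF Pos v] .
    have ABv: "A *\<^sub>v (B *\<^sub>v v) = v" using assoc_mult_mat_vec[OF A B v] AB v by simp
    have nB: "nrm2 (B *\<^sub>v v) \<le> C * a"
    proof -
      have "S (mat_adjoint B * B) v v = (B *\<^sub>v v) \<bullet>c (B *\<^sub>v v)"
        unfolding S_def using assoc_mult_mat_vec[of "mat_adjoint B" n n B n v] B v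
          adj_sprod[of "mat_adjoint B" n n "B *\<^sub>v v" v] by simp
      hence "nrm2 (B *\<^sub>v v) = Re (S (mat_adjoint B * B) v v)" unfolding nrm2_def by simp
      also have "\<dots> \<le> cmod (S (mat_adjoint B * B) v v)" by (rule complex_Re_le_cmod)
      also have "\<dots> \<le> C * a" unfolding C_def a_def by (rule GB[OF BaB v])
      finally show ?thesis .
    qed
    have rK: "r \<le> K * a"
    proof -
      have "S A (B *\<^sub>v v) (B *\<^sub>v v) = v \<bullet>c (B *\<^sub>v v)" unfolding S_def ABv ..
      hence "r \<le> cmod (v \<bullet>c (B *\<^sub>v v))" unfolding r_def by (simp add: complex_Re_le_cmod)
      also have "\<dots> = sqrt ((cmod (v \<bullet>c (B *\<^sub>v v)))^2)" by simp
      also have "\<dots> \<le> sqrt (a * (C * a))"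
        using csp_CS[OF v Bv] nB a0 unfolding a_def
        by (intro real_sqrt_le_mono) (meson mult_left_mono order_trans nrm2_ge)
      also have "\<dots> = K * a" unfolding K_def using a0
        by (simp add: real_sqrt_mult power2_eq_square[symmetric] mult.commute mult.left_commute)
      finally show ?thesis .
    qed
    have "a = Re (S A (B *\<^sub>v v) v)" unfolding S_def ABv a_def nrm2_def ..
    hence "a^2 \<le> (cmod (S A (B *\<^sub>v v) v))^2"
      using complex_Re_le_cmod[of "S A (B *\<^sub>v v) v"] a0 by (simp add: power_mono)
    also have "\<dots> \<le> r * q" unfolding r_def q_def by (rule pos_CS[OF Pos Bv v])
    also have "\<dots> \<le> (K * a) * q" using rK q0 by (rule mult_right_mono)
    finally have aa: "a * a \<le> (K * a) * q" by (simp add: power2_eq_square)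
    have "a \<le> (K + 1) * q"
    proof (cases "a = 0")
      case False
      hence "a > 0" using a0 by simp
      hence "a \<le> K * q" using aa by (simp add: mult.assoc mult.left_commute[of a])
      thus ?thesis using q0 by (simp add: distrib_right)
    qed (use q0 K0 in simp)
    thus ?thesis unfolding c a_def q_def using K0 by (simp add: field_simps)
  qed
  show ?thesis using K0 main by (intro exI[of _ "1 / (K + 1)"]) auto
qed


lemma div_tendsto: "(N::nat) > 0 \<Longrightarrow> filterlim (\<lambda>n. n div N) sequentially sequentially"
  unfolding filterlim_at_top eventually_sequentially
proof (intro allI exI[of _ "_ * N"] allI impI)
  fix Z n assume "N > 0" "Z * N \<le> n"
  hence "Z * N div N \<le> n div N" by (intro div_le_mono)
  thus "Z \<le> n div N" using \<open>N > 0\<close> by simp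
qed

context main
begin

lemma triv_Suc: "triv N \<Longrightarrow> triv (Suc N)"
  unfolding triv_def using ker_mono by blast

lemma B_to_0: assumes t: "triv N" and v: "v \<in> carrier_vec d"
  shows "(\<lambda>n. Re (S (Bn n) v v)) \<longlonglongrightarrow> 0"
proof -
  define N1 where "N1 = Suc N"
  have t1: "triv N1" unfolding N1_def by (rule triv_Suc[OF t])
  have N1: "N1 > 0" unfolding N1_def by simp
  obtain c0 where c0: "c0 > 0" and lb: "\<And>v. v \<in> carrier_vec d \<Longrightarrow> c0 * nrm2 v \<le> Re (S (Pn N1) v v)"
    using lower_bound[OF Pn_pos, of N1] t1 unfolding triv_def by blast
  define c where "c = min c0 1"
  have c: "c > 0" "c \<le> 1" unfolding c_def using c0 by auto
  have lb': "c * nrm2 w \<le> Re (S (Pn N1) w w)" if w: "w \<in> carrier_vec d" for w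
    using lb[OF w] nrm2_ge[of w] unfolding c_def
    by (meson min.cobounded1 mult_right_mono order_trans)
  have BN: "Re (S (Bn N1) w w) \<le> (1 - c) * Re (S Q w w)" if w: "w \<in> carrier_vec d" for w
  proof -
    have qw: "Q *\<^sub>v w \<in> carrier_vec d" using w by simp
    have "Re (S (Bn N1) w w) = Re (S (Bn N1) (Q *\<^sub>v w) (Q *\<^sub>v w))" using B_Q[OF w] by simp
    also have "\<dots> \<le> (1 - c) * nrm2 (Q *\<^sub>v w)"
      using PB_sum[OF qw, of N1] lb'[OF qw] by (simp add: algebra_simps)
    also have "\<dots> = (1 - c) * Re (S Q w w)" using ReQ[OF w] by simp
    finally show ?thesis .
  qed
  have decay: "Re (S (Bn (k * N1)) w w) \<le> (1 - c)^k * Re (S Q w w)" if w: "w \<in> carrier_vec d" for k w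
    using w
  proof (induct k arbitrary: w)
    case 0
    then show ?case unfolding Bn_def by simp
  next
    case (Suc k)
    have kk: "Suc k * N1 = k * N1 + N1" by simp
    have e: "Bn (Suc k * N1) = (Td ^^ (k * N1)) (Bn N1)"
      unfolding Bn_def kk funpow_add o_apply ..
    have "Re (S (Bn (Suc k * N1)) w w) \<le> (1 - c) * Re (S ((Td ^^ (k * N1)) Q) w w)"
      unfolding e by (rule mono_pow[OF Bn_c Qc BN Suc(2)])
    also have "\<dots> \<le> (1 - c) * ((1 - c)^k * Re (S Q w w))"
      using Suc(1)[OF Suc(2)] c unfolding Bn_def by (intro mult_left_mono) auto
    finally show ?case by simp
  qed
  have bound: "Re (S (Bn n) v v) \<le> (1 - c)^(n div N1) * nrm2 v" for n
  proof -
    have "Re (S (Bn n) v v) \<le> Re (S (Bn ((n div N1) * N1)) v v)"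
      by (rule B_antimono[OF _ v]) simp
    also have "\<dots> \<le> (1 - c)^(n div N1) * Re (S Q v v)" by (rule decay[OF v])
    also have "\<dots> \<le> (1 - c)^(n div N1) * nrm2 v"
      using ReQ_le[OF v] c by (intro mult_left_mono) auto
    finally show ?thesis .
  qed
  have "(\<lambda>n. (1 - c)^n) \<longlonglongrightarrow> 0" using c by (intro LIMSEQ_power_zero) auto
  hence "(\<lambda>n. (1 - c)^(n div N1)) \<longlonglongrightarrow> 0" by (rule filterlim_compose[OF _ div_tendsto[OF N1]])
  hence l: "(\<lambda>n. (1 - c)^(n div N1) * nrm2 v) \<longlonglongrightarrow> 0 * nrm2 v" by (intro tendsto_mult tendsto_const)
  show ?thesis
  proof (rule tendsto_sandwich[OF _ _ tendsto_const])
    show "\<forall>\<^sub>F n in sequentially. 0 \<le> Re (S (Bn n) v v)" using pos_Re[OF Bn_pos v] by simp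
    show "\<forall>\<^sub>F n in sequentially. Re (S (Bn n) v v) \<le> (1 - c)^(n div N1) * nrm2 v" using bound by simp
  qed (use l in simp)
qed

end


context proj
begin

lemma S_PXP: assumes X: "X \<in> carrier_mat d d" and x: "x \<in> carrier_vec d" and y: "y \<in> carrier_vec d"
  shows "S (P * X * P) x y = S X (P *\<^sub>v x) (P *\<^sub>v y)"
proof -
  have "(P * X * P) *\<^sub>v x = P *\<^sub>v (X *\<^sub>v (P *\<^sub>v x))"
    by (rule trans[OF assoc_mult_mat_vec[of "P * X" d d P d x] assoc_mult_mat_vec[of P d d X d "P *\<^sub>v x"]])
       (use X x in auto)
  thus ?thesis unfolding S_def using adjP[of "X *\<^sub>v (P *\<^sub>v x)" y] X x y by simp
qed

lemma S_QXQ: assumes X: "X \<in> carrier_mat d d" and x: "x \<in> carrier_vec d"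
  shows "S (Q * X * Q) x x = S X (Q *\<^sub>v x) (Q *\<^sub>v x)"
proof -
  have "(Q * X * Q) *\<^sub>v x = Q *\<^sub>v (X *\<^sub>v (Q *\<^sub>v x))"
    by (rule trans[OF assoc_mult_mat_vec[of "Q * X" d d Q d x] assoc_mult_mat_vec[of Q d d X d "Q *\<^sub>v x"]])
       (use X x in auto)
  thus ?thesis unfolding S_def using adj_sprod[of Q d d "X *\<^sub>v (Q *\<^sub>v x)" x] Qadj X x by simp
qed

lemma Y_decomp: assumes X: "X \<in> carrier_mat d d" and x: "x \<in> carrier_vec d" and y: "y \<in> carrier_vec d"
  shows "S (X - P * X * P) x y = S X (Q *\<^sub>v x) y + S X (P *\<^sub>v x) (Q *\<^sub>v y)"
proof -
  have c: "P *\<^sub>v x \<in> carrier_vec d" "Q *\<^sub>v x \<in> carrier_vec d" "P *\<^sub>v y \<in> carrier_vec d" "Q *\<^sub>v y \<in> carrier_vec d"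
    using x y by auto
  have "S (X - P * X * P) x y = S X x y - S X (P *\<^sub>v x) (P *\<^sub>v y)"
    using S_minus_mat[of X d "P * X * P" x y] S_PXP[OF X x y] X x y
      mult_carrier_mat[OF mult_carrier_mat[OF Pc X] Pc] by simp
  also have "S X x y = S X (P *\<^sub>v x) y + S X (Q *\<^sub>v x) y"
    using S_add1[OF X c(1) c(2) y] decomp[OF x] by simp
  also have "S X (P *\<^sub>v x) y = S X (P *\<^sub>v x) (P *\<^sub>v y) + S X (P *\<^sub>v x) (Q *\<^sub>v y)"
    using S_add2[OF X c(3) c(4) c(1)] decomp[OF y] by simp
  finally show ?thesis by simp
qed

end

context main
begin

lemma Td_pow_one: "(Td ^^ n) (1\<^sub>m d) = 1\<^sub>m d"
  by (induct n) (auto simp: kraus_one[OF K])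

lemma Bn_entries: assumes t: "triv N" and i: "i < d" and j: "j < d"
  shows "(\<lambda>n. Bn n $$ (i,j)) \<longlonglongrightarrow> 0"
proof -
  have diag: "(\<lambda>n. Re (Bn n $$ (k,k))) \<longlonglongrightarrow> 0" if k: "k < d" for k
    using B_to_0[OF t, of "unit_vec d k"] S_unit[OF Bn_c k k] by simp
  have "(\<lambda>n. sqrt (Re (Bn n $$ (j,j)) * Re (Bn n $$ (i,i)))) \<longlonglongrightarrow> sqrt (0 * 0)"
    by (intro tendsto_real_sqrt tendsto_mult diag i j)
  hence l: "(\<lambda>n. sqrt (Re (Bn n $$ (j,j)) * Re (Bn n $$ (i,i)))) \<longlonglongrightarrow> 0" by simp
  have "(\<lambda>n. norm (Bn n $$ (i,j))) \<longlonglongrightarrow> 0"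
  proof (rule tendsto_sandwich[OF _ _ tendsto_const l])
    show "\<forall>\<^sub>F n in sequentially. 0 \<le> norm (Bn n $$ (i,j))" by simp
    show "\<forall>\<^sub>F n in sequentially. norm (Bn n $$ (i,j)) \<le> sqrt (Re (Bn n $$ (j,j)) * Re (Bn n $$ (i,i)))"
      using entry_CS[OF Bn_pos i j] by (intro always_eventually allI real_le_rsqrt) simp
  qed
  thus ?thesis by (simp add: tendsto_norm_zero_iff)
qed

end


context main
begin

lemma triv_GAS: assumes t: "triv N" shows "GAS d Ms P"
  unfolding GAS_def
proof (intro conjI inv allI impI)
  fix \<rho> assume dens: "density_op d \<rho>"
  have Rpos: "positive_op d \<rho>" and Rtr: "mtrace \<rho> = 1" using dens unfolding density_op_def by auto
  have Rc: "\<rho> \<in> carrier_mat d d" using Rpos by (rule pos_carrier)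
  define X where "X n = (Tm ^^ n) \<rho>" for n
  have Xc: "X n \<in> carrier_mat d d" for n unfolding X_def by (rule map_pow_carrier[OF Ms Rc])
  have Xpos: "positive_op d (X n)" for n unfolding X_def by (rule map_pow_pos[OF Ms Rpos])
  define tr where "tr n = mtrace (Q * X n)" for n
  have tr_eq: "tr n = (\<Sum>a<d. \<Sum>b<d. Bn n $$ (a,b) * \<rho> $$ (b,a))" for n
  proof -
    have "tr n = mtrace (Bn n * \<rho>)" unfolding tr_def X_def Bn_def by (rule trace_dual_pow[OF Ms Qc Rc])
    also have "\<dots> = (\<Sum>a<d. \<Sum>b<d. Bn n $$ (a,b) * \<rho> $$ (b,a))" by (rule mtrace_mult[OF Bn_c Rc])
    finally show ?thesis .
  qed
  have "(\<lambda>n. \<Sum>a<d. \<Sum>b<d. Bn n $$ (a,b) * \<rho> $$ (b,a)) \<longlonglongrightarrow> (\<Sum>a<d. \<Sum>b<d. 0 * \<rho> $$ (b,a))"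
    by (intro tendsto_sum tendsto_mult tendsto_const Bn_entries[OF t]) auto
  hence trl: "(\<lambda>n. Re (tr n)) \<longlonglongrightarrow> 0" unfolding tr_eq using tendsto_Re by fastforce
  have tr_S: "Re (tr n) = (\<Sum>k<d. Re (S (X n) (Q *\<^sub>v unit_vec d k) (Q *\<^sub>v unit_vec d k)))" for n
  proof -
    have QX: "Q * X n \<in> carrier_mat d d" by (rule mult_carrier_mat[OF Qc Xc])
    have QXQ: "Q * X n * Q \<in> carrier_mat d d" by (rule mult_carrier_mat[OF QX Qc])
    have "tr n = mtrace (Q * (Q * X n))" unfolding tr_def using Xc[of n] QQ
      by (simp add: assoc_mult_mat[of Q d d Q d "X n" d, symmetric])
    also have "\<dots> = mtrace (Q * X n * Q)" by (rule mtrace_comm[OF Qc QX])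
    also have "\<dots> = (\<Sum>k<d. S (Q * X n * Q) (unit_vec d k) (unit_vec d k))"
      by (rule mtrace_S[OF QXQ])
    also have "\<dots> = (\<Sum>k<d. S (X n) (Q *\<^sub>v unit_vec d k) (Q *\<^sub>v unit_vec d k))"
      by (rule sum.cong[OF refl]) (use S_QXQ[OF Xc] in auto)
    finally show ?thesis by simp
  qed
  have rle: "Re (S (X n) (Q *\<^sub>v unit_vec d k) (Q *\<^sub>v unit_vec d k)) \<le> Re (tr n)" if k: "k < d" for n k
    unfolding tr_S
    by (rule member_le_sum[where f = "\<lambda>k. Re (S (X n) (Q *\<^sub>v unit_vec d k) (Q *\<^sub>v unit_vec d k))"])
       (use k pos_Re[OF Xpos] in auto)
  have tr0: "Re (tr n) \<ge> 0" for n
    unfolding tr_S by (rule sum_nonneg) (use pos_Re[OF Xpos] in auto)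
  have Xtr: "mtrace (X n) = 1" for n
  proof -
    have "mtrace (X n) = mtrace (1\<^sub>m d * X n)" using Xc[of n] by simp
    also have "\<dots> = mtrace ((Td ^^ n) (1\<^sub>m d) * \<rho>)" unfolding X_def by (rule trace_dual_pow[OF Ms _ Rc]) simp
    also have "\<dots> = 1" using Rtr Rc by (simp add: Td_pow_one)
    finally show ?thesis .
  qed
  have Xent: "cmod (X n $$ (i,j)) \<le> 1" if i: "i < d" and j: "j < d" for n i j
  proof -
    have d1: "Re (X n $$ (k,k)) \<le> 1" "Re (X n $$ (k,k)) \<ge> 0" if k: "k < d" for k
      using diag_le_trace[OF Xpos k, of n] Xtr[of n] pos_Re[OF Xpos, of "unit_vec d k" n] S_unit[OF Xc k k] k
      by auto
    have "(cmod (X n $$ (i,j)))^2 \<le> Re (X n $$ (j,j)) * Re (X n $$ (i,i))" by (rule entry_CS[OF Xpos i j])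
    also have "\<dots> \<le> 1 * 1" using d1[OF i] d1[OF j] by (intro mult_mono) auto
    finally show ?thesis by (simp add: power_le_one_iff abs_le_square_iff)
  qed
  have Xbound: "Re (S (X n) w w) \<le> real d * real d * nrm2 w" if w: "w \<in> carrier_vec d" for n w
  proof -
    have "Re (S (X n) w w) \<le> cmod (S (X n) w w)" by (rule complex_Re_le_cmod)
    also have "\<dots> \<le> (\<Sum>i<d. \<Sum>j<d. cmod (X n $$ (i,j))) * nrm2 w" by (rule GB[OF Xc w])
    also have "\<dots> \<le> (\<Sum>i<d. \<Sum>j<d. 1) * nrm2 w"
      by (intro mult_right_mono sum_mono nrm2_ge Xent) auto
    finally show ?thesis by simp
  qed
  define Y where "Y n = X n - P * X n * P" for n
  have Yc: "Y n \<in> carrier_mat d d" for n unfolding Y_def using Xc[of n] by (intro minus_carrier_mat) auto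
  have Yent: "(\<lambda>n. cmod (Y n $$ (i,j))) \<longlonglongrightarrow> 0" if i: "i < d" and j: "j < d" for i j
  proof -
    let ?x = "unit_vec d j" and ?y = "unit_vec d i"
    have x: "?x \<in> carrier_vec d" and y: "?y \<in> carrier_vec d" by auto
    define D1 where "D1 = real d * real d * nrm2 ?y"
    define D2 where "D2 = real d * real d * nrm2 (P *\<^sub>v ?x)"
    have D: "D1 \<ge> 0" "D2 \<ge> 0" unfolding D1_def D2_def using nrm2_ge by auto
    have bd: "cmod (Y n $$ (i,j)) \<le> sqrt (Re (tr n) * D1) + sqrt (D2 * Re (tr n))" for n
    proof -
      have "Y n $$ (i,j) = S (Y n) ?x ?y" using S_unit[OF Yc i j] by simp
      also have "\<dots> = S (X n) (Q *\<^sub>v ?x) ?y + S (X n) (P *\<^sub>v ?x) (Q *\<^sub>v ?y)"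
        unfolding Y_def by (rule Y_decomp[OF Xc x y])
      finally have e: "Y n $$ (i,j) = S (X n) (Q *\<^sub>v ?x) ?y + S (X n) (P *\<^sub>v ?x) (Q *\<^sub>v ?y)" .
      have "(cmod (S (X n) (Q *\<^sub>v ?x) ?y))^2 \<le> Re (S (X n) (Q *\<^sub>v ?x) (Q *\<^sub>v ?x)) * Re (S (X n) ?y ?y)"
        by (rule pos_CS[OF Xpos]) (use x y in auto)
      also have "\<dots> \<le> Re (tr n) * D1" unfolding D1_def
        using rle[OF j, of n] Xbound[OF y, of n] pos_Re[OF Xpos, of "Q *\<^sub>v ?x" n] pos_Re[OF Xpos y, of n] x
        by (intro mult_mono) auto
      finally have 1: "cmod (S (X n) (Q *\<^sub>v ?x) ?y) \<le> sqrt (Re (tr n) * D1)" by (rule real_le_rsqrt)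
      have "(cmod (S (X n) (P *\<^sub>v ?x) (Q *\<^sub>v ?y)))^2 \<le> Re (S (X n) (P *\<^sub>v ?x) (P *\<^sub>v ?x)) * Re (S (X n) (Q *\<^sub>v ?y) (Q *\<^sub>v ?y))"
        by (rule pos_CS[OF Xpos]) (use x y in auto)
      also have "\<dots> \<le> D2 * Re (tr n)" unfolding D2_def
        using rle[OF i, of n] Xbound[of "P *\<^sub>v ?x" n] pos_Re[OF Xpos, of "Q *\<^sub>v ?y" n] pos_Re[OF Xpos, of "P *\<^sub>v ?x" n] x
        by (intro mult_mono) auto
      finally have 2: "cmod (S (X n) (P *\<^sub>v ?x) (Q *\<^sub>v ?y)) \<le> sqrt (D2 * Re (tr n))" by (rule real_le_rsqrt)
      show ?thesis unfolding e using norm_triangle_ineq[of "S (X n) (Q *\<^sub>v ?x) ?y" "S (X n) (P *\<^sub>v ?x) (Q *\<^sub>v ?y)"] 1 2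
        by simp
    qed
    have "(\<lambda>n. sqrt (Re (tr n) * D1) + sqrt (D2 * Re (tr n))) \<longlonglongrightarrow> sqrt (0 * D1) + sqrt (D2 * 0)"
      by (intro tendsto_add tendsto_real_sqrt tendsto_mult trl tendsto_const)
    hence l: "(\<lambda>n. sqrt (Re (tr n) * D1) + sqrt (D2 * Re (tr n))) \<longlonglongrightarrow> 0" by simp
    show ?thesis
      by (rule tendsto_sandwich[OF _ _ tendsto_const l]) (use bd in auto)
  qed
  have "(\<lambda>n. sqrt (\<Sum>i<d. \<Sum>j<d. (cmod (Y n $$ (i,j)))^2)) \<longlonglongrightarrow> sqrt (\<Sum>i<d. \<Sum>j<d. 0^2)"
    by (intro tendsto_real_sqrt tendsto_sum tendsto_power Yent) auto
  moreover have "dim_row (Y n) = d" "dim_col (Y n) = d" for n using carrier_matD[OF Yc[of n]] by auto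
  ultimately have "(\<lambda>n. mnorm (Y n)) \<longlonglongrightarrow> 0" unfolding mnorm_def by simp
  thus "(\<lambda>n. mnorm ((Tm ^^ n) \<rho> - P * (Tm ^^ n) \<rho> * P)) \<longlonglongrightarrow> 0" unfolding Y_def X_def .
qed

theorem GAS_iff: "GAS d Ms P \<longleftrightarrow> (\<exists>N. triv N)"
  using GAS_triv triv_GAS by blast

end


theorem corollary2:
  fixes d :: nat and Ms :: "complex mat list" and P :: "complex mat"
  assumes "kraus_ops d Ms"
    and "orth_proj d P"
    and "invariant_sub d Ms (proj_range d P)"
  shows "GAS d Ms P \<longleftrightarrow>
    (\<exists>N. (\<forall>n < N. supp d ((kraus_dual d Ms ^^ n) P) \<subset> supp d ((kraus_dual d Ms ^^ Suc n) P))
         \<and> supp d ((kraus_dual d Ms ^^ N) P) = carrier_vec d)"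
proof -
  interpret main d P Ms
    by (unfold_locales) (use assms in auto)
  show ?thesis using GAS_iff chain_iff unfolding Pn_def by simp
qed

end
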